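(* Consider the system of $n$ heterogeneous queues under the $k$-SLQ-$d$ policy described in the context, with $k\ge1$ and $d\in\{1,\dots,n-1\}$ fixed. The Markov chain $\{\mathbf X(t)\}_{t\ge0}$ is positive recurrent for every arrival rate $\lambda$ with $n\lambda<\sum_{l=1}^n\mu_l$ if and only if $$\sum_{l=1}^n\mu_l\ \ge\ (n-d)\max_{l\in[n]}\mu_l .$$
   Context: Model: time is discrete. There are $n$ FIFO single-server queues of infinite capacity; $Q_i(t)$ is the length of queue $i$ at the beginning of slot $t$. Jobs arrive as an i.i.d. process $\{A(t)\}$ with $\mathbb E[A(1)]=n\lambda$, $\mathrm{Var}(A(1))=n\sigma_\lambda^2$, $A(1)\le nA_{\max}$ a.s.; all jobs arriving in slot $t$ join a single queue chosen by the policy (indicator vector $\mathbf Y(t)$). Server $i$ has potential service $S_i(t)$, i.i.d. over time, independent of arrivals and queue lengths, with mean $\mu_i$, variance $\sigma_{\mu_i}^2$, $S_i(1)\le S_{\max}$, and $0<\mu_{\min}\le\mu_i\le\mu_{\max}$. Dynamics: $\mathbf Q(t+1)=[\mathbf Q(t)+A(t)\mathbf Y(t)-\mathbf S(t)]^+$. $[n]=\{1,\dots,n\}$. The $k$-SLQ-$d$ policy: at every slot $t$ that is a multiple of $k(n-d)$ the dispatcher observes $\mathbf Q(t)$ and finds the set $I_d(t)$ of the $d$ longest queues (ties broken uniformly at random); during the next $k(n-d)$ slots (including $t$) arrivals are dispatched Round-Robin over $[n]\setminus I_d(t)$, for $k$ rounds. The Markov chain is $\mathbf X(t)=(\mathbf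 Q(t),I_d(t),I_R(t),N_R(t))$, where $I_d(t)$ is the set computed at the last observation time, $I_R(t)$ is the queue receiving arrivals at slot $t$, and $N_R(t)\in\{0,\dots,k-1\}$ counts completed Round-Robin rounds since the last observation. *)

theory Defs
  imports "HOL-Probability.Probability"
begin

text \<open>prob_not_hit K C t x = P_x(X_1 \<notin> C, ..., X_t \<notin> C) = P_x(tau_C > t),
  where tau_C = min {s \<ge> 1. X_s \<in> C} is the hitting (return) time of C.\<close>
fun prob_not_hit :: "('s \<Rightarrow> 's pmf) \<Rightarrow> 's set \<Rightarrow> nat \<Rightarrow> 's \<Rightarrow> real" where
  "prob_not_hit K C 0 x = 1"
| "prob_not_hit K C (Suc t) x =
     measure_pmf.expectation (K x) (\<lambda>y. if y \<in> C then 0 else prob_not_hit K C t y)"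

text \<open>E_x[tau_C] = sum_t P_x(tau_C > t) is finite.\<close>
definition finite_mean_hitting_time :: "('s \<Rightarrow> 's pmf) \<Rightarrow> 's set \<Rightarrow> 's \<Rightarrow> bool" where
  "finite_mean_hitting_time K C x \<longleftrightarrow> summable (\<lambda>t. prob_not_hit K C t x)"

text \<open>Positive recurrence of a (possibly reducible) chain on the state space \<Omega>:
  there is a finite set of states that is reached (returned to) in finite
  expected time from every state.  For irreducible chains this is equivalent
  to positive recurrence of all states.\<close>
definition positive_recurrent_chain :: "'s set \<Rightarrow> ('s \<Rightarrow> 's pmf) \<Rightarrow> bool" where
  "positive_recurrent_chain \<Omega> K \<longleftrightarrow>
     (\<exists>C. finite C \<and> C \<subseteq> \<Omega> \<and> (\<forall>x\<in>\<Omega>. finite_mean_hitting_time K C x))"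

text \<open>Queues are indexed by {0..<n}.  State X = (Q, I_d, I_R, N_R).\<close>
type_synonym slq_state = "(nat \<Rightarrow> nat) \<times> nat set \<times> nat \<times> nat"

text \<open>Mean potential service of server i: mu_i.  S is the joint law of the
  service vector (S_1(t),...,S_n(t)).\<close>
definition svc_mean :: "(nat \<Rightarrow> nat) pmf \<Rightarrow> nat \<Rightarrow> real" where
  "svc_mean S i = measure_pmf.expectation S (\<lambda>s. real (s i))"

text \<open>Admissible choices of the set of the d longest queues; choosing uniformly
  among them = ties broken uniformly at random.\<close>
definition longest_sets :: "nat \<Rightarrow> nat \<Rightarrow> (nat \<Rightarrow> nat) \<Rightarrow> nat set set" where
  "longest_sets n d Q = {D. D \<subseteq> {0..<n} \<and> card D = d \<and>
       (\<forall>i\<in>D. \<forall>j\<in>{0..<n} - D. Q j \<le> Q i)}"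

definition slq_states :: "nat \<Rightarrow> nat \<Rightarrow> nat \<Rightarrow> slq_state set" where
  "slq_states n d k = {(Q, D, r, m). (\<forall>i\<ge>n. Q i = 0) \<and> D \<subseteq> {0..<n} \<and> card D = d \<and>
       r \<in> {0..<n} - D \<and> m < k}"

text \<open>One slot: arrivals a ~ A all join queue r = I_R(t); service vector s ~ S
  (independent); Q(t+1) = [Q(t) + a e_r - s]^+.  Then Round-Robin (in increasing
  index order) over [n] - I_d advances; after k complete rounds, i.e. k(n-d) slots,
  Q(t+1) is observed and a new set of d longest queues is drawn.\<close>
definition slq_step :: "nat \<Rightarrow> nat \<Rightarrow> nat \<Rightarrow> nat pmf \<Rightarrow> (nat \<Rightarrow> nat) pmf \<Rightarrow> slq_state \<Rightarrow> slq_state pmf" where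
  "slq_step n d k A S x = (case x of (Q, D, r, m) \<Rightarrow>
     do { a \<leftarrow> A; s \<leftarrow> S;
          let Q' = (\<lambda>i. if i < n then (Q i + (if i = r then a else 0)) - s i else 0);
          let R = {0..<n} - D;
          if (\<exists>j\<in>R. r < j) then return_pmf (Q', D, Min {j\<in>R. r < j}, m)
          else if Suc m < k then return_pmf (Q', D, Min R, Suc m)
          else do { D' \<leftarrow> pmf_of_set (longest_sets n d Q');
                    return_pmf (Q', D', Min ({0..<n} - D'), 0) } })"

definition slq_positive_recurrent :: "nat \<Rightarrow> nat \<Rightarrow> nat \<Rightarrow> nat pmf \<Rightarrow> (nat \<Rightarrow> nat) pmf \<Rightarrow> bool" where
  "slq_positive_recurrent n d k A S \<longleftrightarrow>
     positive_recurrent_chain (slq_states n d k) (slq_step n d k A S)"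

end

theory Submission
  imports Defs
begin

lemma exp_bind_fin:
  fixes h :: "'b \<Rightarrow> real"
  assumes "finite (set_pmf p)" "\<And>x. x \<in> set_pmf p \<Longrightarrow> finite (set_pmf (f x))"
  shows "measure_pmf.expectation (p \<bind> f) h =
         measure_pmf.expectation p (\<lambda>x. measure_pmf.expectation (f x) h)"
proof -
  have "measure_pmf.expectation (p \<bind> f) h =
      (\<Sum>a\<in>set_pmf p. pmf p a *\<^sub>R measure_pmf.expectation (f a) h)"
    using assms by (intro pmf_expectation_bind) auto
  also have "\<dots> = measure_pmf.expectation p (\<lambda>x. measure_pmf.expectation (f x) h)"
    using assms by (subst integral_measure_pmf_real[of "set_pmf p"]) (auto simp: mult.commute)
  finally show ?thesis .
qed

lemma exp_mono_fin:
  fixes f g :: "'a \<Rightarrow> real"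
  assumes "finite (set_pmf p)" "\<And>x. x \<in> set_pmf p \<Longrightarrow> f x \<le> g x"
  shows "measure_pmf.expectation p f \<le> measure_pmf.expectation p g"
  using assms by (intro integral_mono_AE) (auto simp: integrable_measure_pmf_finite AE_measure_pmf_iff)

lemma exp_le_const:
  fixes f :: "'a \<Rightarrow> real"
  assumes "finite (set_pmf p)" "\<And>x. x \<in> set_pmf p \<Longrightarrow> f x \<le> c"
  shows "measure_pmf.expectation p f \<le> c"
proof -
  have "measure_pmf.expectation p f \<le> measure_pmf.expectation p (\<lambda>_. c)"
    using assms by (intro exp_mono_fin) auto
  then show ?thesis by simp
qed

lemma exp_ge_const:
  fixes f :: "'a \<Rightarrow> real"
  assumes "finite (set_pmf p)" "\<And>x. x \<in> set_pmf p \<Longrightarrow> c \<le> f x"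
  shows "c \<le> measure_pmf.expectation p f"
proof -
  have "measure_pmf.expectation p (\<lambda>_. c) \<le> measure_pmf.expectation p f"
    using assms by (intro exp_mono_fin) auto
  then show ?thesis by simp
qed

lemma pnh_nonneg: "0 \<le> prob_not_hit K C t x"
proof (induction t arbitrary: x)
  case 0 then show ?case by simp
next
  case (Suc t) then show ?case by (auto intro!: integral_nonneg_AE)
qed

lemma pnh_le1: "prob_not_hit K C t x \<le> 1"
proof (induction t arbitrary: x)
  case 0 then show ?case by simp
next
  case (Suc t)
  have "measure_pmf.expectation (K x) (\<lambda>y. if y \<in> C then 0 else prob_not_hit K C t y)
     \<le> measure_pmf.expectation (K x) (\<lambda>y. 1)"
    using Suc by (intro integral_mono_AE) (auto simp: pnh_nonneg measure_pmf.integrable_const_bound[where B=1] abs_le_iff)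
  then show ?case by simp
qed

lemma foster:
  fixes K :: "'s \<Rightarrow> 's pmf" and U :: "'s \<Rightarrow> real"
  assumes closed: "\<And>x. x \<in> \<Omega> \<Longrightarrow> set_pmf (K x) \<subseteq> \<Omega>"
    and fin: "\<And>x. x \<in> \<Omega> \<Longrightarrow> finite (set_pmf (K x))"
    and nonneg: "\<And>x. x \<in> \<Omega> \<Longrightarrow> 0 \<le> U x"
    and drift: "\<And>x. x \<in> \<Omega> \<Longrightarrow> x \<notin> C \<Longrightarrow> measure_pmf.expectation (K x) U \<le> U x - 1"
    and C: "finite C" "C \<subseteq> \<Omega>"
  shows "positive_recurrent_chain \<Omega> K"
  unfolding positive_recurrent_chain_def
proof (intro exI[of _ C] conjI ballI)
  show "finite C" "C \<subseteq> \<Omega>" by (fact C)+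
  define P where "P N y = (\<Sum>t<N. prob_not_hit K C t y)" for N y
  have Psuc: "P (Suc N) y = 1 + measure_pmf.expectation (K y) (\<lambda>z. if z \<in> C then 0 else P N z)"
    if "y \<in> \<Omega>" for N y
  proof -
    have "P (Suc N) y = 1 + (\<Sum>t<N. prob_not_hit K C (Suc t) y)"
      unfolding P_def by (subst sum.lessThan_Suc_shift) simp
    also have "(\<Sum>t<N. prob_not_hit K C (Suc t) y) =
       (\<Sum>t<N. measure_pmf.expectation (K y) (\<lambda>z. if z \<in> C then 0 else prob_not_hit K C t z))"
      by simp
    also have "\<dots> = measure_pmf.expectation (K y) (\<lambda>z. \<Sum>t<N. if z \<in> C then 0 else prob_not_hit K C t z)"
      using fin[OF that] by (intro Bochner_Integration.integral_sum[symmetric]) (simp add: integrable_measure_pmf_finite)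
    also have "\<dots> = measure_pmf.expectation (K y) (\<lambda>z. if z \<in> C then 0 else P N z)"
      unfolding P_def by (intro Bochner_Integration.integral_cong) auto
    finally show ?thesis .
  qed
  have bound: "P N y \<le> U y" if "y \<in> \<Omega>" "y \<notin> C" for N y
    using that
  proof (induction N arbitrary: y)
    case 0 then show ?case using nonneg by (simp add: P_def)
  next
    case (Suc N)
    have "measure_pmf.expectation (K y) (\<lambda>z. if z \<in> C then 0 else P N z)
        \<le> measure_pmf.expectation (K y) U"
      using Suc closed nonneg fin by (intro exp_mono_fin) auto
    then show ?case using Psuc[OF Suc.prems(1), of N] drift[OF Suc.prems] by simp
  qed
  fix x assume x: "x \<in> \<Omega>"
  show "finite_mean_hitting_time K C x"
    unfolding finite_mean_hitting_time_def
  proof (rule summableI_nonneg_bounded)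
    show "0 \<le> prob_not_hit K C n x" for n by (rule pnh_nonneg)
    fix N
    have "P N x \<le> P (Suc N) x" unfolding P_def by (simp add: pnh_nonneg)
    also have "\<dots> \<le> 1 + measure_pmf.expectation (K x) U"
      using Psuc[OF x] bound closed[OF x] nonneg fin[OF x] by (auto intro!: exp_mono_fin)
    finally show "(\<Sum>i<N. prob_not_hit K C i x) \<le> 1 + measure_pmf.expectation (K x) U"
      by (simp add: P_def)
  qed
qed

fun stopG :: "('s \<Rightarrow> 's pmf) \<Rightarrow> 's set \<Rightarrow> ('s \<Rightarrow> real) \<Rightarrow> nat \<Rightarrow> 's \<Rightarrow> real" where
  "stopG K C V 0 x = V x"
| "stopG K C V (Suc N) x = measure_pmf.expectation (K x) (\<lambda>y. if y \<in> C then V y else stopG K C V N y)"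

lemma not_pr:
  fixes K :: "'s \<Rightarrow> 's pmf" and V :: "'s \<Rightarrow> real"
  assumes closed: "\<And>x. x \<in> \<Omega> \<Longrightarrow> set_pmf (K x) \<subseteq> \<Omega>"
    and fin: "\<And>x. x \<in> \<Omega> \<Longrightarrow> finite (set_pmf (K x))"
    and sub: "\<And>x. x \<in> \<Omega> \<Longrightarrow> V x \<le> measure_pmf.expectation (K x) V"
    and inc: "\<And>x y. x \<in> \<Omega> \<Longrightarrow> y \<in> set_pmf (K x) \<Longrightarrow> V y \<le> V x + B"
    and B: "0 \<le> B"
    and unb: "\<And>b. \<exists>x\<in>\<Omega>. b < V x"
  shows "\<not> positive_recurrent_chain \<Omega> K"
proof
  assume "positive_recurrent_chain \<Omega> K"
  then obtain C where C: "finite C" "C \<subseteq> \<Omega>" and summ0: "\<forall>x\<in>\<Omega>. finite_mean_hitting_time K C x"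
    unfolding positive_recurrent_chain_def by blast
  have summ: "summable (\<lambda>t. prob_not_hit K C t x)" if "x \<in> \<Omega>" for x
    using summ0 that unfolding finite_mean_hitting_time_def by blast
  define M where "M = Max (insert 0 (V ` C))"
  have M0: "0 \<le> M" and MC: "\<And>y. y \<in> C \<Longrightarrow> V y \<le> M"
    using C(1) by (auto simp: M_def)
  have G0: "(stopG K C V) 0 = V" and GS: "(stopG K C V) (Suc N) x = measure_pmf.expectation (K x) (\<lambda>y. if y \<in> C then V y else (stopG K C V) N y)" for N x
    by (simp_all add: fun_eq_iff)
  have low: "V x \<le> (stopG K C V) N x" if "x \<in> \<Omega>" for N x
    using that
  proof (induction N arbitrary: x)
    case 0 then show ?case by (simp add: G0)
  next
    case (Suc N)
    have "measure_pmf.expectation (K x) V \<le> measure_pmf.expectation (K x) (\<lambda>y. if y \<in> C then V y else (stopG K C V) N y)"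
      using Suc closed fin by (intro exp_mono_fin) auto
    then show ?case using sub[OF Suc.prems] GS by simp
  qed
  have up: "(stopG K C V) N x \<le> M + (V x + B * N) * prob_not_hit K C N x" if "x \<in> \<Omega>" for N x
    using that
  proof (induction N arbitrary: x)
    case 0 then show ?case using M0 by (simp add: G0)
  next
    case (Suc N)
    have "(stopG K C V) (Suc N) x \<le> measure_pmf.expectation (K x)
         (\<lambda>y. M + (V x + B * Suc N) * (if y \<in> C then 0 else prob_not_hit K C N y))"
      unfolding GS
    proof (intro exp_mono_fin[OF fin[OF Suc.prems]])
      fix y assume y: "y \<in> set_pmf (K x)"
      then have yO: "y \<in> \<Omega>" using closed Suc.prems by auto
      show "(if y \<in> C then V y else (stopG K C V) N y) \<le> M + (V x + B * Suc N) * (if y \<in> C then 0 else prob_not_hit K C N y)"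
      proof (cases "y \<in> C")
        case True then show ?thesis using MC by simp
      next
        case False
        have "(V y + B * N) * prob_not_hit K C N y \<le> (V x + B * Suc N) * prob_not_hit K C N y"
          using inc[OF Suc.prems y] by (intro mult_right_mono pnh_nonneg) (simp add: algebra_simps)
        then show ?thesis using Suc.IH[OF yO] False by simp
      qed
    qed
    also have "\<dots> = M + (V x + B * Suc N) * prob_not_hit K C (Suc N) x"
      using fin[OF Suc.prems] by (simp add: integrable_measure_pmf_finite del: of_nat_Suc)
    finally show ?case .
  qed
  obtain x0 where x0: "x0 \<in> \<Omega>" "M < V x0" using unb by blast
  define c where "c = (V x0 - M) / (V x0 + B)"
  have c0: "0 < c" using x0 M0 B by (simp add: c_def)
  have lowp: "c * inverse (real (Suc N)) \<le> prob_not_hit K C N x0" for N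
  proof -
    have "V x0 - M \<le> (V x0 + B * N) * prob_not_hit K C N x0"
      using low[OF x0(1), of N] up[OF x0(1), of N] by simp
    also have "\<dots> \<le> ((V x0 + B) * Suc N) * prob_not_hit K C N x0"
      using x0 M0 B by (intro mult_right_mono pnh_nonneg) (auto simp: algebra_simps)
    finally have "V x0 - M \<le> ((V x0 + B) * Suc N) * prob_not_hit K C N x0" .
    moreover have "0 < (V x0 + B) * Suc N" using x0 M0 B by simp
    ultimately show ?thesis
      unfolding c_def using x0 M0 B by (simp add: field_simps)
  qed
  have "summable (\<lambda>N. c * inverse (real (Suc N)))"
    using summ[OF x0(1)] lowp c0
    by (intro summable_comparison_test[of "\<lambda>N. c * inverse (real (Suc N))" "\<lambda>N. prob_not_hit K C N x0"])
      (auto intro!: exI[of _ 0])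
  then have "summable (\<lambda>N. inverse (real (Suc N)))"
    using c0 summable_mult[of "\<lambda>N. c * inverse (real (Suc N))" "inverse c"] by simp
  then have "summable (\<lambda>N. inverse (real N))"
    using summable_Suc_iff[where f="\<lambda>n. inverse (real n)"] by simp
  then show False using not_summable_harmonic[where 'a=real] by simp
qed

definition newQ :: "nat \<Rightarrow> (nat \<Rightarrow> nat) \<Rightarrow> nat \<Rightarrow> nat \<Rightarrow> (nat \<Rightarrow> nat) \<Rightarrow> nat \<Rightarrow> nat" where
  "newQ n Q r a s = (\<lambda>i. if i < n then (Q i + (if i = r then a else 0)) - s i else 0)"

definition step_inner :: "nat \<Rightarrow> nat \<Rightarrow> nat \<Rightarrow> (nat \<Rightarrow> nat) \<Rightarrow> nat set \<Rightarrow> nat \<Rightarrow> nat \<Rightarrow> nat \<Rightarrow> (nat \<Rightarrow> nat) \<Rightarrow> slq_state pmf" where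
  "step_inner n d k Q D r m a s =
    (if (\<exists>j\<in>{0..<n} - D. r < j) then return_pmf (newQ n Q r a s, D, Min {j\<in>{0..<n} - D. r < j}, m)
     else if Suc m < k then return_pmf (newQ n Q r a s, D, Min ({0..<n} - D), Suc m)
     else pmf_of_set (longest_sets n d (newQ n Q r a s)) \<bind>
            (\<lambda>D'. return_pmf (newQ n Q r a s, D', Min ({0..<n} - D'), 0)))"

lemma step_eq: "slq_step n d k A S (Q, D, r, m) = A \<bind> (\<lambda>a. S \<bind> (\<lambda>s. step_inner n d k Q D r m a s))"
  unfolding slq_step_def step_inner_def newQ_def Let_def by simp

lemma longest_finite: "finite (longest_sets n d Q)"
  by (rule finite_subset[of _ "Pow {0..<n}"]) (auto simp: longest_sets_def)

lemma longest_ne: "d \<le> n \<Longrightarrow> longest_sets n d Q \<noteq> {}"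
proof (induction d)
  case 0
  have "{} \<in> longest_sets n 0 Q" by (simp add: longest_sets_def)
  then show ?case by blast
next
  case (Suc d)
  then obtain D where D: "D \<in> longest_sets n d Q" by auto
  then have Dsub: "D \<subseteq> {0..<n}" and Dc: "card D = d" and Dl: "\<forall>i\<in>D. \<forall>j\<in>{0..<n} - D. Q j \<le> Q i"
    by (auto simp: longest_sets_def)
  define Rs where "Rs = {0..<n} - D"
  have "card Rs = n - d" unfolding Rs_def using Dsub Dc by (simp add: card_Diff_subset finite_subset)
  then have Rne: "Rs \<noteq> {}" using Suc.prems by auto
  have Rfin: "finite Rs" by (simp add: Rs_def)
  have "Max (Q ` Rs) \<in> Q ` Rs" using Rne Rfin by (intro Max_in) auto
  then obtain j where j: "j \<in> Rs" "Q j = Max (Q ` Rs)" by auto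
  have jmax: "\<And>i. i \<in> Rs \<Longrightarrow> Q i \<le> Q j" using j Rfin by simp
  have "insert j D \<in> longest_sets n (Suc d) Q"
    unfolding longest_sets_def
  proof (intro CollectI conjI ballI)
    show "insert j D \<subseteq> {0..<n}" using Dsub j by (auto simp: Rs_def)
    show "card (insert j D) = Suc d" using j Dc Dsub by (simp add: Rs_def finite_subset)
    fix i i' assume i: "i \<in> insert j D" and i': "i' \<in> {0..<n} - insert j D"
    then have i'R: "i' \<in> Rs" by (auto simp: Rs_def)
    show "Q i' \<le> Q i"
    proof (cases "i = j")
      case True then show ?thesis using jmax i'R by simp
    next
      case False then show ?thesis using i i' Dl by auto
    qed
  qed
  then show ?case by blast
qed

lemma set_pmf_inner_cases:
  assumes "d \<le> n" "y \<in> set_pmf (step_inner n d k Q D r m a s)"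
  obtains (c1) "\<exists>j\<in>{0..<n} - D. r < j" "y = (newQ n Q r a s, D, Min {j\<in>{0..<n} - D. r < j}, m)"
   | (c2) "\<not> (\<exists>j\<in>{0..<n} - D. r < j)" "Suc m < k" "y = (newQ n Q r a s, D, Min ({0..<n} - D), Suc m)"
   | (c3) D' where "\<not> (\<exists>j\<in>{0..<n} - D. r < j)" "\<not> Suc m < k" "D' \<in> longest_sets n d (newQ n Q r a s)"
       "y = (newQ n Q r a s, D', Min ({0..<n} - D'), 0)"
  using assms longest_finite[of n d] longest_ne[OF assms(1)]
  by (auto simp: step_inner_def split: if_splits)

lemma finite_inner: "d \<le> n \<Longrightarrow> finite (set_pmf (step_inner n d k Q D r m a s))"
  using longest_finite[of n d] longest_ne[of d n]
  by (auto simp: step_inner_def)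

lemma set_pmf_step: "set_pmf (slq_step n d k A S (Q, D, r, m)) =
   (\<Union>a\<in>set_pmf A. \<Union>s\<in>set_pmf S. set_pmf (step_inner n d k Q D r m a s))"
  by (simp add: step_eq)

lemma finite_step:
  assumes "finite (set_pmf A)" "finite (set_pmf S)" "d \<le> n"
  shows "finite (set_pmf (slq_step n d k A S x))"
  using assms finite_inner[OF assms(3)] by (cases x) (auto simp: set_pmf_step)

lemma closed_step:
  assumes "d < n" "1 \<le> k" "x \<in> slq_states n d k" "y \<in> set_pmf (slq_step n d k A S x)"
  shows "y \<in> slq_states n d k"
proof -
  obtain Q D r m where x: "x = (Q, D, r, m)" by (cases x)
  with assms have Q0: "\<forall>i\<ge>n. Q i = 0" and Dsub: "D \<subseteq> {0..<n}" and Dc: "card D = d"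
    and rR: "r \<in> {0..<n} - D" and mk: "m < k"
    by (auto simp: slq_states_def)
  from assms(4) x obtain a s where y: "y \<in> set_pmf (step_inner n d k Q D r m a s)"
    by (auto simp: set_pmf_step)
  have nQ: "\<forall>i\<ge>n. newQ n Q r a s i = 0" by (simp add: newQ_def)
  have Rne: "{0..<n} - D' \<noteq> {}" if "D' \<subseteq> {0..<n}" "card D' = d" for D'
  proof -
    have "card ({0..<n} - D') = n - d" using that by (simp add: card_Diff_subset finite_subset)
    then show ?thesis using assms(1) by (intro notI) simp
  qed
  show ?thesis
    using less_imp_le[OF assms(1)] y
  proof (cases rule: set_pmf_inner_cases)
    case c1
    have "Min {j \<in> {0..<n} - D. r < j} \<in> {j \<in> {0..<n} - D. r < j}"
      using c1(1) by (intro Min_in) auto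
    then show ?thesis using c1 nQ Dsub Dc mk by (auto simp: slq_states_def)
  next
    case c2
    have "Min ({0..<n} - D) \<in> {0..<n} - D" using Rne[OF Dsub Dc] by (intro Min_in) auto
    then show ?thesis using c2 nQ Dsub Dc by (auto simp: slq_states_def)
  next
    case (c3 D')
    then have D': "D' \<subseteq> {0..<n}" "card D' = d" by (auto simp: longest_sets_def)
    have "Min ({0..<n} - D') \<in> {0..<n} - D'" using Rne[OF D'] by (intro Min_in) auto
    then show ?thesis using c3 nQ D' assms(2) by (auto simp: slq_states_def)
  qed
qed

lemma lin_exp:
  assumes "finite (set_pmf A)" "finite (set_pmf S)"
  shows "measure_pmf.expectation A (\<lambda>a. measure_pmf.expectation S
           (\<lambda>s. c0 + c1 * real a + (\<Sum>i<n. c2 i * real (s i))))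
       = c0 + c1 * measure_pmf.expectation A real + (\<Sum>i<n. c2 i * svc_mean S i)"
proof -
  have "measure_pmf.expectation S (\<lambda>s. c0 + c1 * real a + (\<Sum>i<n. c2 i * real (s i)))
      = c0 + c1 * real a + (\<Sum>i<n. c2 i * svc_mean S i)" for a
    using assms(2)
    by (simp add: integrable_measure_pmf_finite Bochner_Integration.integral_sum svc_mean_def)
  then show ?thesis
    using assms(1) by (simp add: integrable_measure_pmf_finite)
qed

lemma step_exp_upper:
  assumes fA: "finite (set_pmf A)" and fS: "finite (set_pmf S)" and dn: "d \<le> n"
    and b: "\<And>a s y. a \<in> set_pmf A \<Longrightarrow> s \<in> set_pmf S \<Longrightarrow> y \<in> set_pmf (step_inner n d k Q D r m a s) \<Longrightarrow>
       h y \<le> c0 + c1 * real a + (\<Sum>i<n. c2 i * real (s i))"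
  shows "measure_pmf.expectation (slq_step n d k A S (Q, D, r, m)) h
      \<le> c0 + c1 * measure_pmf.expectation A real + (\<Sum>i<n. c2 i * svc_mean S i)"
proof -
  have "measure_pmf.expectation (slq_step n d k A S (Q, D, r, m)) h =
     measure_pmf.expectation A (\<lambda>a. measure_pmf.expectation S (\<lambda>s.
        measure_pmf.expectation (step_inner n d k Q D r m a s) h))"
    unfolding step_eq using fA fS finite_inner[OF dn]
    by (subst exp_bind_fin) (auto simp: exp_bind_fin)
  also have "\<dots> \<le> measure_pmf.expectation A (\<lambda>a. measure_pmf.expectation S
           (\<lambda>s. c0 + c1 * real a + (\<Sum>i<n. c2 i * real (s i))))"
    using fA fS finite_inner[OF dn] b
    by (intro exp_mono_fin exp_le_const) auto
  also have "\<dots> = c0 + c1 * measure_pmf.expectation A real + (\<Sum>i<n. c2 i * svc_mean S i)"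
    by (rule lin_exp[OF fA fS])
  finally show ?thesis .
qed

lemma step_exp_lower:
  assumes fA: "finite (set_pmf A)" and fS: "finite (set_pmf S)" and dn: "d \<le> n"
    and b: "\<And>a s y. a \<in> set_pmf A \<Longrightarrow> s \<in> set_pmf S \<Longrightarrow> y \<in> set_pmf (step_inner n d k Q D r m a s) \<Longrightarrow>
       c0 + c1 * real a + (\<Sum>i<n. c2 i * real (s i)) \<le> h y"
  shows "c0 + c1 * measure_pmf.expectation A real + (\<Sum>i<n. c2 i * svc_mean S i)
      \<le> measure_pmf.expectation (slq_step n d k A S (Q, D, r, m)) h"
proof -
  have "measure_pmf.expectation (slq_step n d k A S (Q, D, r, m)) h =
     measure_pmf.expectation A (\<lambda>a. measure_pmf.expectation S (\<lambda>s.
        measure_pmf.expectation (step_inner n d k Q D r m a s) h))"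
    unfolding step_eq using fA fS finite_inner[OF dn]
    by (subst exp_bind_fin) (auto simp: exp_bind_fin)
  moreover have "measure_pmf.expectation A (\<lambda>a. measure_pmf.expectation S
           (\<lambda>s. c0 + c1 * real a + (\<Sum>i<n. c2 i * real (s i)))) \<le> \<dots>"
    using fA fS finite_inner[OF dn] b
    by (intro exp_mono_fin exp_ge_const) auto
  ultimately show ?thesis using lin_exp[OF fA fS] by simp
qed

lemma real_diff_ge: "real x - real y \<le> real (x - y)"
  by (cases "y \<le> x") (auto simp: of_nat_diff)

lemma real_diff_le: "real (x - y) \<le> real x"
  by simp

lemma newQ_lower:
  "i < n \<Longrightarrow> real (Q i) + (if i = r then real a else 0) - real (s i) \<le> real (newQ n Q r a s i)"
  using real_diff_ge[of "Q i + (if i = r then a else 0)" "s i"] by (simp add: newQ_def split: if_splits)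

lemma newQ_upper:
  "i < n \<Longrightarrow> real (newQ n Q r a s i) \<le> real (Q i) + (if i = r then real a else 0)"
  using real_diff_le[of "Q i + (if i = r then a else 0)" "s i"] by (simp add: newQ_def split: if_splits)

lemma newQ_upper2:
  "real (newQ n Q r a s i) \<le> real (Q i) + (if i = r then real a else 0)"
  using real_diff_le[of "Q i + (if i = r then a else 0)" "s i"] by (simp add: newQ_def split: if_splits)

lemma succ_set_eq:
  assumes "finite R" "\<exists>j\<in>R. r < j"
  shows "{j\<in>R. Min {j\<in>R. r < j} \<le> j} = {j\<in>R. r < j}"
proof -
  have mem: "Min {j\<in>R. r < j} \<in> {j\<in>R. r < j}" using assms by (intro Min_in) auto
  show ?thesis
  proof (intro equalityI subsetI)
    fix j assume "j \<in> {j\<in>R. Min {j\<in>R. r < j} \<le> j}"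
    then show "j \<in> {j\<in>R. r < j}" using mem by auto
  next
    fix j assume "j \<in> {j\<in>R. r < j}"
    then show "j \<in> {j\<in>R. Min {j\<in>R. r < j} \<le> j}" using assms(1) by (auto intro: Min_le)
  qed
qed

lemma cur_set_eq: "(r::nat) \<in> R \<Longrightarrow> {j\<in>R. r \<le> j} = insert r {j\<in>R. r < j}"
  by auto

lemma cur_set_last: "(r::nat) \<in> R \<Longrightarrow> \<not> (\<exists>j\<in>R. r < j) \<Longrightarrow> {j\<in>R. r \<le> j} = {r}"
  by (auto simp: not_less)

lemma min_set_all: "finite R \<Longrightarrow> {j\<in>R. Min R \<le> j} = R"
  by (auto intro: Min_le)

lemma card_R: "D \<subseteq> {0..<n} \<Longrightarrow> card D = d \<Longrightarrow> card ({0..<n} - D) = n - d"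
  by (simp add: card_Diff_subset finite_subset)

lemma sum_if_ne:
  fixes f :: "nat \<Rightarrow> real" and c :: real
  shows "(\<Sum>i<n. (if i \<noteq> l then c else 0) * f i) = c * (\<Sum>i\<in>{..<n}-{l}. f i)"
proof -
  have "(\<Sum>i<n. (if i \<noteq> l then c else 0) * f i) = (\<Sum>i<n. (if i \<in> {..<n}-{l} then c * f i else 0))"
    by (intro sum.cong) auto
  also have "\<dots> = (\<Sum>i\<in>{..<n}-{l}. c * f i)"
    by (subst sum.inter_restrict[symmetric]) (auto intro!: sum.cong)
  finally show ?thesis by (simp add: sum_distrib_left)
qed

definition dlt :: "real \<Rightarrow> real \<Rightarrow> nat \<Rightarrow> nat \<Rightarrow> real" where
  "dlt p sg l j = (if j \<noteq> l then p else 0) - sg"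

definition psi :: "nat \<Rightarrow> real \<Rightarrow> real \<Rightarrow> nat \<Rightarrow> nat set \<Rightarrow> nat \<Rightarrow> real" where
  "psi n p sg l D r = (\<Sum>j\<in>{j\<in>{0..<n} - D. r \<le> j}. dlt p sg l j)"

definition Vn :: "nat \<Rightarrow> nat \<Rightarrow> real \<Rightarrow> real \<Rightarrow> slq_state \<Rightarrow> real" where
  "Vn n l p sg x = (case x of (Q, D, r, m) \<Rightarrow> (\<Sum>i\<in>{..<n}-{l}. real (Q i)) + psi n p sg l D r)"

lemma psi_abs:
  assumes "0 \<le> p" "0 \<le> sg"
  shows "\<bar>psi n p sg l D r\<bar> \<le> real n * (p + sg)"
proof -
  let ?X = "{j\<in>{0..<n} - D. r \<le> j}"
  have "\<bar>psi n p sg l D r\<bar> \<le> (\<Sum>j\<in>?X. \<bar>dlt p sg l j\<bar>)"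
    unfolding psi_def by (rule sum_abs)
  also have "\<dots> \<le> real (card ?X) * (p + sg)"
    using assms by (intro sum_bounded_above) (auto simp: dlt_def)
  also have "\<dots> \<le> real n * (p + sg)"
  proof -
    have "card ?X \<le> card {0..<n}" by (intro card_mono) auto
    then show ?thesis using assms by (intro mult_right_mono) auto
  qed
  finally show ?thesis .
qed

lemma sum_dlt_R_nonneg:
  assumes "D' \<subseteq> {0..<n}" "card D' = d" "d < n" "0 \<le> p"
    and pge: "real (n-d) * sg \<le> (real (n-d) - 1) * p"
  shows "0 \<le> (\<Sum>j\<in>{0..<n} - D'. dlt p sg l j)"
proof -
  let ?R = "{0..<n} - D'"
  have cR: "card ?R = n - d" using card_R[OF assms(1,2)] .
  have "(\<Sum>j\<in>?R. dlt p sg l j) = (\<Sum>j\<in>?R. (if j \<noteq> l then p else 0)) - real (card ?R) * sg"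
    by (simp add: dlt_def sum_subtractf)
  also have "(\<Sum>j\<in>?R. (if j \<noteq> l then p else 0)) = real (card (?R - {l})) * p"
  proof -
    have "?R \<inter> {j. j \<noteq> l} = ?R - {l}" by auto
    then show ?thesis by (simp add: sum.If_cases)
  qed
  also have "real (card (?R - {l})) \<ge> real (card ?R) - 1"
    using real_diff_ge[of "card ?R" 1] by (simp add: card_Diff_singleton_if)
  then have "real (card (?R - {l})) * p \<ge> (real (card ?R) - 1) * p"
    using assms(4) by (intro mult_right_mono) auto
  ultimately show ?thesis using pge cR by simp
qed

lemma psi_step:
  assumes dn: "d < n" and x: "(Q, D, r, m) \<in> slq_states n d k" and p0: "0 \<le> p"
    and pge: "real (n-d) * sg \<le> (real (n-d) - 1) * p"
    and y: "y \<in> set_pmf (step_inner n d k Q D r m a s)"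
  shows "\<exists>D2 r2 m2. y = (newQ n Q r a s, D2, r2, m2) \<and> psi n p sg l D r - dlt p sg l r \<le> psi n p sg l D2 r2"
proof -
  have Dsub: "D \<subseteq> {0..<n}" and Dc: "card D = d" and rR: "r \<in> {0..<n} - D"
    using x by (auto simp: slq_states_def)
  let ?R = "{0..<n} - D"
  show ?thesis
    using less_imp_le[OF dn] y
  proof (cases rule: set_pmf_inner_cases)
    case c1
    have "psi n p sg l D (Min {j\<in>?R. r < j}) = (\<Sum>j\<in>{j\<in>?R. r < j}. dlt p sg l j)"
      unfolding psi_def by (subst succ_set_eq) (use c1 in auto)
    moreover have "psi n p sg l D r = dlt p sg l r + (\<Sum>j\<in>{j\<in>?R. r < j}. dlt p sg l j)"
      unfolding psi_def using rR by (subst cur_set_eq) auto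
    ultimately show ?thesis using c1 by auto
  next
    case c2
    have "psi n p sg l D r = dlt p sg l r"
      unfolding psi_def using rR c2 by (subst cur_set_last) auto
    moreover have "psi n p sg l D (Min ?R) = (\<Sum>j\<in>?R. dlt p sg l j)"
      unfolding psi_def by (subst min_set_all) auto
    moreover have "0 \<le> (\<Sum>j\<in>?R. dlt p sg l j)"
      using Dsub Dc dn p0 pge by (intro sum_dlt_R_nonneg) auto
    ultimately show ?thesis using c2 by auto
  next
    case (c3 D')
    have D': "D' \<subseteq> {0..<n}" "card D' = d" using c3 by (auto simp: longest_sets_def)
    have "psi n p sg l D r = dlt p sg l r"
      unfolding psi_def using rR c3 by (subst cur_set_last) auto
    moreover have "psi n p sg l D' (Min ({0..<n} - D')) = (\<Sum>j\<in>{0..<n} - D'. dlt p sg l j)"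
      unfolding psi_def by (subst min_set_all) auto
    moreover have "0 \<le> (\<Sum>j\<in>{0..<n} - D'. dlt p sg l j)"
      using D' dn p0 pge by (intro sum_dlt_R_nonneg) auto
    ultimately show ?thesis using c3 by auto
  qed
qed

lemma unstable:
  assumes k: "1 \<le> k" and dn: "d < n"
    and fA: "finite (set_pmf A)" and fS: "finite (set_pmf S)"
    and Amax: "\<forall>a\<in>set_pmf A. a \<le> Amax"
    and l: "l < n" and n2: "2 \<le> n"
    and p0: "0 \<le> measure_pmf.expectation A real"
    and sg0: "0 \<le> (\<Sum>i\<in>{..<n}-{l}. svc_mean S i)"
    and pge: "real (n-d) * (\<Sum>i\<in>{..<n}-{l}. svc_mean S i) \<le> (real (n-d) - 1) * measure_pmf.expectation A real"
  shows "\<not> slq_positive_recurrent n d k A S"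
proof -
  define p where "p = measure_pmf.expectation A real"
  define sg where "sg = (\<Sum>i\<in>{..<n}-{l}. svc_mean S i)"
  define I where "I = {..<n}-{l}"
  define V where "V = Vn n l p sg"
  have p0': "0 \<le> p" and sg0': "0 \<le> sg" using p0 sg0 by (simp_all add: p_def sg_def)
  have pge': "real (n-d) * sg \<le> (real (n-d) - 1) * p" using pge by (simp add: p_def sg_def)
  show ?thesis unfolding slq_positive_recurrent_def
  proof (rule not_pr[where V=V and B="real Amax + 2 * (real n * (p + sg))"])
    show "set_pmf (slq_step n d k A S x) \<subseteq> slq_states n d k" if "x \<in> slq_states n d k" for x
      using closed_step[OF dn k that] by blast
    show "finite (set_pmf (slq_step n d k A S x))" for x
      using finite_step[OF fA fS] dn by simp
    show "0 \<le> real Amax + 2 * (real n * (p + sg))" using p0' sg0' by simp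
  next
    fix x assume x: "x \<in> slq_states n d k"
    obtain Q D r m where xe: "x = (Q, D, r, m)" by (cases x)
    have rR: "r \<in> {0..<n} - D" and rn: "r < n" using x xe by (auto simp: slq_states_def)
    let ?c0 = "(\<Sum>i\<in>I. real (Q i)) + psi n p sg l D r - dlt p sg l r"
    let ?c1 = "if r \<noteq> l then 1 else (0::real)"
    let ?c2 = "\<lambda>i. if i \<noteq> l then -1 else (0::real)"
    have "?c0 + ?c1 * measure_pmf.expectation A real + (\<Sum>i<n. ?c2 i * svc_mean S i)
        \<le> measure_pmf.expectation (slq_step n d k A S (Q, D, r, m)) V"
    proof (rule step_exp_lower[OF fA fS less_imp_le[OF dn]])
      fix a s y assume a: "a \<in> set_pmf A" and s: "s \<in> set_pmf S"
        and y: "y \<in> set_pmf (step_inner n d k Q D r m a s)"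
      obtain D2 r2 m2 where ye: "y = (newQ n Q r a s, D2, r2, m2)"
        and ps: "psi n p sg l D r - dlt p sg l r \<le> psi n p sg l D2 r2"
        using psi_step[OF dn x[unfolded xe] p0' pge' y] by blast
      have "(\<Sum>i\<in>I. real (Q i) + (if i = r then real a else 0) - real (s i))
          \<le> (\<Sum>i\<in>I. real (newQ n Q r a s i))"
        by (intro sum_mono newQ_lower) (auto simp: I_def)
      moreover have "(\<Sum>i\<in>I. real (Q i) + (if i = r then real a else 0) - real (s i))
          = (\<Sum>i\<in>I. real (Q i)) + ?c1 * real a - (\<Sum>i\<in>I. real (s i))"
        using rn by (simp add: sum.distrib sum_subtractf I_def)
      moreover have "(\<Sum>i<n. ?c2 i * real (s i)) = - (\<Sum>i\<in>I. real (s i))"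
        using sum_if_ne[where l=l and c="-1" and n=n and f="\<lambda>i. real (s i)"] by (simp add: I_def)
      ultimately show "?c0 + ?c1 * real a + (\<Sum>i<n. ?c2 i * real (s i)) \<le> V y"
        using ps by (simp add: V_def Vn_def ye I_def)
    qed
    moreover have "(\<Sum>i<n. ?c2 i * svc_mean S i) = - sg"
      using sum_if_ne[where l=l and c="-1" and n=n and f="\<lambda>i. svc_mean S i"] by (simp add: sg_def)
    ultimately show "V x \<le> measure_pmf.expectation (slq_step n d k A S x) V"
      using rn by (simp add: xe V_def Vn_def dlt_def p_def[symmetric] I_def split: if_splits)
  next
    fix x y assume x: "x \<in> slq_states n d k" and y: "y \<in> set_pmf (slq_step n d k A S x)"
    obtain Q D r m where xe: "x = (Q, D, r, m)" by (cases x)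
    obtain a s where a: "a \<in> set_pmf A" and s: "s \<in> set_pmf S"
      and y': "y \<in> set_pmf (step_inner n d k Q D r m a s)"
      using y by (auto simp: xe set_pmf_step)
    obtain D2 r2 m2 where ye: "y = (newQ n Q r a s, D2, r2, m2)"
      using psi_step[OF dn x[unfolded xe] p0' pge' y'] by blast
    have "(\<Sum>i\<in>I. real (newQ n Q r a s i)) \<le> (\<Sum>i\<in>I. real (Q i) + (if i = r then real a else 0))"
      by (intro sum_mono newQ_upper2)
    also have "\<dots> \<le> (\<Sum>i\<in>I. real (Q i)) + real a"
      by (simp add: sum.distrib sum.delta I_def)
    finally have h1: "(\<Sum>i\<in>I. real (newQ n Q r a s i)) \<le> (\<Sum>i\<in>I. real (Q i)) + real Amax"
      using Amax a by force
    have "psi n p sg l D2 r2 \<le> real n * (p + sg)" "- (real n * (p + sg)) \<le> psi n p sg l D r"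
      using psi_abs[OF p0' sg0', of n l D2 r2] psi_abs[OF p0' sg0', of n l D r] by (auto simp: abs_le_iff)
    then show "V y \<le> V x + (real Amax + 2 * (real n * (p + sg)))"
      using h1 by (simp add: V_def Vn_def xe ye I_def)
  next
    fix b :: real
    have dD: "d \<in> {0..<n} - {0..<d}" using dn by simp
    obtain j where j: "j < n" "j \<noteq> l" using n2 l
      by (metis One_nat_def Suc_1 Suc_le_lessD less_irrefl nat_neq_iff not_less_eq zero_less_Suc)
    define N :: nat where "N = nat \<lceil>b - psi n p sg l {0..<d} d\<rceil> + 1"
    define Q0 where "Q0 = (\<lambda>i. if i = j then N else 0)"
    have x0: "(Q0, {0..<d}, d, 0) \<in> slq_states n d k"
      using dD j k by (auto simp: slq_states_def Q0_def)
    have "(\<Sum>i\<in>I. real (Q0 i)) = real N"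
    proof -
      have "(\<Sum>i\<in>I. real (Q0 i)) = (\<Sum>i\<in>I. if i = j then real N else 0)"
        by (intro sum.cong) (auto simp: Q0_def)
      then show ?thesis using j by (simp add: I_def)
    qed
    then have "V (Q0, {0..<d}, d, 0) = real N + psi n p sg l {0..<d} d"
      by (simp add: V_def Vn_def I_def)
    moreover have "b < real N + psi n p sg l {0..<d} d"
      unfolding N_def by linarith
    ultimately show "\<exists>x\<in>slq_states n d k. b < V x" using x0 by (intro bexI[of _ "(Q0, {0..<d}, d, 0)"]) auto
  qed
qed

lemma g_pos:
  fixes mu :: "nat \<Rightarrow> real"
  assumes d: "1 \<le> d" "d < n" and mupos: "\<forall>i<n. 0 < mu i" and xpos: "0 < x"
    and xlt: "real (n-d) * x < (\<Sum>i<n. mu i)"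
    and cond: "\<forall>i<n. real (n-d) * mu i \<le> (\<Sum>i<n. mu i)"
  shows "real (n-d) * x < (\<Sum>i<n. min (mu i) x)"
proof -
  define T where "T = (\<Sum>i<n. mu i)"
  have nd: "0 < real (n-d)" using d by simp
  have Tpos: "0 < T" using xlt xpos nd unfolding T_def by (smt (verit) mult_pos_pos)
  define t where "t = real (n-d) * x / T"
  have t0: "0 < t" and t1: "t < 1" using Tpos nd xpos xlt by (auto simp: t_def T_def field_simps)
  have le: "t * mu i \<le> min (mu i) x" if "i < n" for i
  proof -
    have "t * mu i \<le> mu i" using t1 mupos that by (simp add: mult_le_cancel_right1 less_imp_le)
    moreover have "t * mu i \<le> x"
    proof -
      have "t * mu i = x * (real (n-d) * mu i) / T" by (simp add: t_def)
      also have "\<dots> \<le> x * T / T" using cond that xpos Tpos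
        by (intro divide_right_mono mult_left_mono) (auto simp: T_def)
      also have "\<dots> = x" using Tpos by simp
      finally show ?thesis .
    qed
    ultimately show ?thesis by simp
  qed
  have "\<exists>i\<in>{..<n}. t * mu i < min (mu i) x"
  proof (rule ccontr)
    assume "\<not> ?thesis"
    then have eq: "\<And>i. i < n \<Longrightarrow> t * mu i = min (mu i) x" using le by force
    have "\<And>i. i < n \<Longrightarrow> min (mu i) x = x"
    proof -
      fix i assume i: "i < n"
      show "min (mu i) x = x"
      proof (rule ccontr)
        assume "min (mu i) x \<noteq> x"
        then have "min (mu i) x = mu i" by (simp add: min_def split: if_splits)
        then have "t * mu i = mu i" using eq[OF i] by simp
        then show False using t1 mupos i by force
      qed
    qed
    then have "\<And>i. i < n \<Longrightarrow> t * mu i = x" using eq by simp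
    then have tx: "\<And>i. i < n \<Longrightarrow> t * mu i = x" .
    have all: "real (n-d) * mu i = T" if i: "i < n" for i
    proof -
      have "real (n-d) * x / T * mu i = x" using tx[OF i] by (simp add: t_def)
      then have "real (n-d) * x * mu i = x * T" using Tpos by (simp add: field_simps)
      then have "x * (real (n-d) * mu i) = x * T" by (simp add: algebra_simps)
      then show ?thesis using xpos by simp
    qed
    have "real (n-d) * T = (\<Sum>i<n. real (n-d) * mu i)" by (simp add: T_def sum_distrib_left)
    also have "\<dots> = (\<Sum>i<n. T)" using all by simp
    also have "\<dots> = real n * T" by simp
    finally have "real (n-d) = real n" using Tpos by simp
    then show False using d by simp
  qed
  then have "(\<Sum>i<n. t * mu i) < (\<Sum>i<n. min (mu i) x)"
    using le by (intro sum_strict_mono_ex1) auto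
  moreover have "(\<Sum>i<n. t * mu i) = real (n-d) * x"
  proof -
    have "(\<Sum>i<n. t * mu i) = t * T" by (simp add: T_def sum_distrib_left)
    then show ?thesis using Tpos by (simp add: t_def)
  qed
  ultimately show ?thesis by simp
qed

lemma key_ineq:
  fixes mu :: "nat \<Rightarrow> real"
  assumes d: "1 \<le> d" "d < n" and mupos: "\<forall>i<n. 0 < mu i" and xpos: "0 < x"
    and xlt: "real (n-d) * x < (\<Sum>i<n. mu i)"
    and cond: "\<forall>i<n. real (n-d) * mu i \<le> (\<Sum>i<n. mu i)"
  shows "\<exists>\<delta>>0. \<forall>Q. \<forall>D\<in>longest_sets n d Q.
     \<delta> * (\<Sum>i<n. real (Q i)) \<le> (\<Sum>i<n. mu i * real (Q i)) - x * (\<Sum>i\<in>{0..<n}-D. real (Q i))"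
proof -
  define \<gamma> where "\<gamma> = (\<Sum>i<n. min (mu i) x) - real (n-d) * x"
  have g: "0 < \<gamma>" using g_pos[OF d mupos xpos xlt cond] by (simp add: \<gamma>_def)
  have nne: "{..<n} \<noteq> {}" using d by auto
  define mm where "mm = Min (mu ` {..<n})"
  have mm: "0 < mm" using mupos nne by (simp add: mm_def)
  have mmle: "\<And>i. i < n \<Longrightarrow> mm \<le> mu i" by (simp add: mm_def)
  define \<delta> where "\<delta> = min (\<gamma> / real n) mm"
  have dpos: "0 < \<delta>" using g mm d by (simp add: \<delta>_def)
  show ?thesis
  proof (intro exI[of _ \<delta>] conjI allI ballI dpos)
    fix Q :: "nat \<Rightarrow> nat" and D assume D: "D \<in> longest_sets n d Q"
    then have Dsub: "D \<subseteq> {..<n}" and Dc: "card D = d" and Dl: "\<forall>i\<in>D. \<forall>j\<in>{..<n} - D. Q j \<le> Q i"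
      by (auto simp: longest_sets_def)
    have Dfin: "finite D" using Dsub finite_subset by blast
    have Dne: "D \<noteq> {}" using Dc d by auto
    define R where "R = {..<n} - D"
    have cR: "card R = n - d" using card_R[of D n d] Dsub Dc by (simp add: R_def atLeast0LessThan)
    have RD: "{0..<n} - D = R" by (auto simp: R_def)
    define m where "m = Min (Q ` D)"
    have mD: "\<And>i. i \<in> D \<Longrightarrow> m \<le> Q i" using Dfin by (simp add: m_def)
    have "m \<in> Q ` D" using Dfin Dne by (simp add: m_def)
    then obtain i0 where i0: "i0 \<in> D" "m = Q i0" by auto
    have mR: "\<And>j. j \<in> R \<Longrightarrow> Q j \<le> m" using Dl i0 by (auto simp: R_def)
    have split: "\<And>f. (\<Sum>i<n. f i) = (\<Sum>i\<in>D. f i) + (\<Sum>i\<in>R. f i)"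
      unfolding R_def using Dsub by (simp add: sum.subset_diff[of D "{..<n}"] add.commute)
    have s1: "(\<Sum>j\<in>R. (min (mu j) x - x) * real m) \<le> (\<Sum>j\<in>R. (mu j - x) * real (Q j))"
    proof (intro sum_mono)
      fix j assume j: "j \<in> R"
      have "(min (mu j) x - x) * real m \<le> (min (mu j) x - x) * real (Q j)"
        using mR[OF j] by (intro mult_left_mono_neg) auto
      also have "\<dots> \<le> (mu j - x) * real (Q j)" by (intro mult_right_mono) auto
      finally show "(min (mu j) x - x) * real m \<le> (mu j - x) * real (Q j)" .
    qed
    have s2: "(\<Sum>i\<in>D. min (mu i) x * real m + mm * (real (Q i) - real m)) \<le> (\<Sum>i\<in>D. mu i * real (Q i))"
    proof (intro sum_mono)
      fix i assume i: "i \<in> D"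
      then have i': "i < n" using Dsub by auto
      have "min (mu i) x * real m \<le> mu i * real m" by (intro mult_right_mono) auto
      moreover have "mm * (real (Q i) - real m) \<le> mu i * (real (Q i) - real m)"
        using mmle[OF i'] mD[OF i] by (intro mult_right_mono) auto
      ultimately show "min (mu i) x * real m + mm * (real (Q i) - real m) \<le> mu i * real (Q i)"
        by (simp add: algebra_simps)
    qed
    define E where "E = (\<Sum>i\<in>D. real (Q i) - real m)"
    have E0: "0 \<le> E" unfolding E_def using mD by (intro sum_nonneg) auto
    have lhs: "real m * \<gamma> + mm * E \<le> (\<Sum>i<n. mu i * real (Q i)) - x * (\<Sum>i\<in>R. real (Q i))"
    proof -
      have "(\<Sum>i<n. mu i * real (Q i)) - x * (\<Sum>i\<in>R. real (Q i))
          = (\<Sum>i\<in>D. mu i * real (Q i)) + (\<Sum>j\<in>R. (mu j - x) * real (Q j))"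
        by (simp add: split[of "\<lambda>i. mu i * real (Q i)"] sum_distrib_left left_diff_distrib sum_subtractf)
      moreover have "(\<Sum>i\<in>D. min (mu i) x * real m + mm * (real (Q i) - real m)) + (\<Sum>j\<in>R. (min (mu j) x - x) * real m)
          = real m * \<gamma> + mm * E"
      proof -
        have "(\<Sum>i\<in>D. min (mu i) x * real m + mm * (real (Q i) - real m)) + (\<Sum>j\<in>R. (min (mu j) x - x) * real m)
            = real m * ((\<Sum>i\<in>D. min (mu i) x) + (\<Sum>j\<in>R. min (mu j) x)) - real m * real (card R) * x + mm * E"
          by (simp add: sum.distrib sum_distrib_left sum_distrib_right left_diff_distrib sum_subtractf E_def algebra_simps)
        also have "\<dots> = real m * \<gamma> + mm * E"
          using cR by (simp add: \<gamma>_def split[of "\<lambda>i. min (mu i) x"] algebra_simps)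
        finally show ?thesis .
      qed
      ultimately show ?thesis using s1 s2 by linarith
    qed
    have tot: "(\<Sum>i<n. real (Q i)) \<le> E + real n * real m"
    proof -
      have "(\<Sum>i\<in>R. real (Q i)) \<le> (\<Sum>i\<in>R. real m)" using mR by (intro sum_mono) auto
      moreover have "(\<Sum>i\<in>D. real (Q i)) = E + real d * real m" using Dc by (simp add: E_def sum_subtractf)
      moreover have "real d + real (n - d) = real n" using d by simp
      ultimately show ?thesis using cR
        by (simp add: split[of "\<lambda>i. real (Q i)"] algebra_simps)
    qed
    have "\<delta> * (\<Sum>i<n. real (Q i)) \<le> \<delta> * E + (\<delta> * real n) * real m"
      using mult_left_mono[OF tot less_imp_le[OF dpos]] by (simp add: algebra_simps)
    also have "\<dots> \<le> mm * E + \<gamma> * real m"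
    proof (intro add_mono mult_right_mono)
      show "\<delta> \<le> mm" by (simp add: \<delta>_def)
      show "\<delta> * real n \<le> \<gamma>" using d by (simp add: \<delta>_def min_def field_simps split: if_splits)
    qed (use E0 in auto)
    also have "\<dots> \<le> (\<Sum>i<n. mu i * real (Q i)) - x * (\<Sum>i\<in>{0..<n}-D. real (Q i))"
      using lhs RD by (simp add: algebra_simps)
    finally show "\<delta> * (\<Sum>i<n. real (Q i)) \<le> (\<Sum>i<n. mu i * real (Q i)) - x * (\<Sum>i\<in>{0..<n}-D. real (Q i))" .
  qed
qed

lemma card_sub_n: "X \<subseteq> {0..<n} \<Longrightarrow> card X \<le> n"
  using card_mono[of "{0..<n}" X] by simp

locale stab =
  fixes n d k :: nat and p :: real and mu :: "nat \<Rightarrow> real" and \<delta> xx :: real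
  assumes k: "1 \<le> k" and d1: "1 \<le> d" and dn: "d < n" and p0: "0 \<le> p"
    and mupos: "\<forall>i<n. 0 < mu i" and dpos: "0 < \<delta>" and pxx: "p \<le> real (n-d) * xx"
    and KL: "\<forall>Q. \<forall>D\<in>longest_sets n d Q. \<delta> * (\<Sum>i<n. real (Q i))
        \<le> (\<Sum>i<n. mu i * real (Q i)) - xx * (\<Sum>i\<in>{0..<n}-D. real (Q i))"
begin

definition TT :: "(nat \<Rightarrow> nat) \<Rightarrow> nat \<Rightarrow> real" where
  "TT Q j = 2 * p * real (Q j) - 2 * (\<Sum>i<n. mu i * real (Q i)) + 2 * \<delta> * (\<Sum>i<n. real (Q i))"

definition Psi :: "(nat \<Rightarrow> nat) \<Rightarrow> nat set \<Rightarrow> nat \<Rightarrow> nat \<Rightarrow> real" where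
  "Psi Q D r m = (\<Sum>j\<in>{j\<in>{0..<n} - D. r \<le> j}. TT Q j) + real (k - 1 - m) * (\<Sum>j\<in>{0..<n} - D. TT Q j)"

lemma TT_lower: "- 2 * (\<Sum>i<n. mu i * real (Q i)) \<le> TT Q j"
  using p0 dpos by (simp add: TT_def sum_nonneg)

lemma L_nonneg: "0 \<le> (\<Sum>i<n. mu i * real (Q i))"
  using mupos by (intro sum_nonneg) (simp add: less_imp_le)

lemma Psi_lower: "- (2 * real (n + k * n)) * (\<Sum>i<n. mu i * real (Q i)) \<le> Psi Q D r m"
proof -
  define L where "L = (\<Sum>i<n. mu i * real (Q i))"
  have L0: "0 \<le> L" using L_nonneg by (simp add: L_def)
  let ?X = "{j\<in>{0..<n} - D. r \<le> j}" and ?R = "{0..<n} - D"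
  have cX: "card ?X \<le> n" by (rule card_sub_n) auto
  have cR: "card ?R \<le> n" by (rule card_sub_n) auto
  have a1: "real (card ?X) * (- 2 * L) \<le> (\<Sum>j\<in>?X. TT Q j)"
    using TT_lower by (intro sum_bounded_below) (simp add: L_def)
  have a2: "real (card ?R) * (- 2 * L) \<le> (\<Sum>j\<in>?R. TT Q j)"
    using TT_lower by (intro sum_bounded_below) (simp add: L_def)
  have b1: "real n * (- 2 * L) \<le> real (card ?X) * (- 2 * L)"
    using cX L0 by (intro mult_right_mono_neg) auto
  have b2: "real (k - 1 - m) * (real n * (- 2 * L)) \<le> real (k - 1 - m) * (\<Sum>j\<in>?R. TT Q j)"
  proof -
    have "real n * (- 2 * L) \<le> real (card ?R) * (- 2 * L)"
      using cR L0 by (intro mult_right_mono_neg) auto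
    then show ?thesis using a2 by (intro mult_left_mono) auto
  qed
  have b3: "real k * (real n * (- 2 * L)) \<le> real (k - 1 - m) * (real n * (- 2 * L))"
    using L0 by (intro mult_right_mono_neg) auto
  have "- (2 * real (n + k * n)) * L = real n * (- 2 * L) + real k * (real n * (- 2 * L))"
    by (simp add: algebra_simps)
  also have "\<dots> \<le> Psi Q D r m" unfolding Psi_def using a1 b1 b2 b3 by linarith
  finally show ?thesis by (simp add: L_def)
qed

lemma TT_diff:
  assumes M: "\<forall>i<n. \<bar>real (Q2 i) - real (Q i)\<bar> \<le> M" and j: "j < n"
  shows "\<bar>TT Q2 j - TT Q j\<bar> \<le> 2 * p * M + 2 * (\<Sum>i<n. mu i) * M + 2 * \<delta> * (real n * M)"
proof -
  have M0: "0 \<le> M" using M j by (meson abs_ge_zero order_trans)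
  have e1: "\<bar>(\<Sum>i<n. mu i * real (Q2 i)) - (\<Sum>i<n. mu i * real (Q i))\<bar> \<le> (\<Sum>i<n. mu i) * M"
  proof -
    have "\<bar>(\<Sum>i<n. mu i * real (Q2 i)) - (\<Sum>i<n. mu i * real (Q i))\<bar> = \<bar>\<Sum>i<n. mu i * (real (Q2 i) - real (Q i))\<bar>"
      by (simp add: sum_subtractf right_diff_distrib)
    also have "\<dots> \<le> (\<Sum>i<n. \<bar>mu i * (real (Q2 i) - real (Q i))\<bar>)" by (rule sum_abs)
    also have "\<dots> \<le> (\<Sum>i<n. mu i * M)"
    proof (intro sum_mono)
      fix i assume "i \<in> {..<n}"
      then have "0 < mu i" "\<bar>real (Q2 i) - real (Q i)\<bar> \<le> M" using mupos M by auto
      then show "\<bar>mu i * (real (Q2 i) - real (Q i))\<bar> \<le> mu i * M" by (simp add: abs_mult mult_left_mono)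
    qed
    finally show ?thesis by (simp add: sum_distrib_right)
  qed
  have e2: "\<bar>(\<Sum>i<n. real (Q2 i)) - (\<Sum>i<n. real (Q i))\<bar> \<le> real n * M"
  proof -
    have "\<bar>(\<Sum>i<n. real (Q2 i)) - (\<Sum>i<n. real (Q i))\<bar> = \<bar>\<Sum>i<n. (real (Q2 i) - real (Q i))\<bar>"
      by (simp add: sum_subtractf)
    also have "\<dots> \<le> (\<Sum>i<n. \<bar>real (Q2 i) - real (Q i)\<bar>)" by (rule sum_abs)
    also have "\<dots> \<le> (\<Sum>i<n. M)" using M by (intro sum_mono) auto
    finally show ?thesis by simp
  qed
  have e3: "\<bar>real (Q2 j) - real (Q j)\<bar> \<le> M" using M j by auto
  have "TT Q2 j - TT Q j = 2 * p * (real (Q2 j) - real (Q j))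
      - 2 * ((\<Sum>i<n. mu i * real (Q2 i)) - (\<Sum>i<n. mu i * real (Q i)))
      + 2 * \<delta> * ((\<Sum>i<n. real (Q2 i)) - (\<Sum>i<n. real (Q i)))"
    by (simp add: TT_def algebra_simps)
  also have "\<bar>\<dots>\<bar> \<le> 2 * p * M + 2 * (\<Sum>i<n. mu i) * M + 2 * \<delta> * (real n * M)"
  proof -
    have "\<bar>2 * p * (real (Q2 j) - real (Q j))\<bar> \<le> 2 * p * M"
      using e3 p0 by (simp add: abs_mult mult_left_mono)
    moreover have "\<bar>2 * \<delta> * ((\<Sum>i<n. real (Q2 i)) - (\<Sum>i<n. real (Q i)))\<bar> \<le> 2 * \<delta> * (real n * M)"
      using e2 dpos by (simp add: abs_mult mult_left_mono)
    moreover have "\<bar>2 * ((\<Sum>i<n. mu i * real (Q2 i)) - (\<Sum>i<n. mu i * real (Q i)))\<bar> \<le> 2 * (\<Sum>i<n. mu i) * M"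
      using e1 by (simp add: abs_mult)
    ultimately show ?thesis by (smt (verit))
  qed
  finally show ?thesis .
qed

definition E1 :: "real \<Rightarrow> real" where
  "E1 M = 2 * p * M + 2 * (\<Sum>i<n. mu i) * M + 2 * \<delta> * (real n * M)"

lemma Psi_diff:
  assumes M: "\<forall>i<n. \<bar>real (Q2 i) - real (Q i)\<bar> \<le> M"
  shows "Psi Q2 D r m \<le> Psi Q D r m + real (n + k * n) * E1 M"
proof -
  let ?X = "{j\<in>{0..<n} - D. r \<le> j}" and ?R = "{0..<n} - D"
  have td: "\<And>j. j \<in> {0..<n} \<Longrightarrow> TT Q2 j - TT Q j \<le> E1 M"
    using TT_diff[OF M] by (auto simp: E1_def abs_le_iff)
  have E0: "0 \<le> E1 M" using TT_diff[OF M, of 0] dn by (auto simp: E1_def intro: order_trans[OF abs_ge_zero])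
  have cX: "card ?X \<le> n" by (rule card_sub_n) auto
  have cR: "card ?R \<le> n" by (rule card_sub_n) auto
  have a1: "(\<Sum>j\<in>?X. TT Q2 j - TT Q j) \<le> real n * E1 M"
  proof -
    have "(\<Sum>j\<in>?X. TT Q2 j - TT Q j) \<le> real (card ?X) * E1 M"
      using td by (intro sum_bounded_above) auto
    also have "\<dots> \<le> real n * E1 M" using cX E0 by (intro mult_right_mono) auto
    finally show ?thesis .
  qed
  have a2: "real (k - 1 - m) * (\<Sum>j\<in>?R. TT Q2 j - TT Q j) \<le> real k * (real n * E1 M)"
  proof -
    have "(\<Sum>j\<in>?R. TT Q2 j - TT Q j) \<le> real (card ?R) * E1 M"
      using td by (intro sum_bounded_above) auto
    also have "\<dots> \<le> real n * E1 M" using cR E0 by (intro mult_right_mono) auto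
    finally have "(\<Sum>j\<in>?R. TT Q2 j - TT Q j) \<le> real n * E1 M" .
    then have "real (k - 1 - m) * (\<Sum>j\<in>?R. TT Q2 j - TT Q j) \<le> real (k - 1 - m) * (real n * E1 M)"
      by (intro mult_left_mono) auto
    also have "\<dots> \<le> real k * (real n * E1 M)" using E0 by (intro mult_right_mono) auto
    finally show ?thesis .
  qed
  have "Psi Q2 D r m - Psi Q D r m = (\<Sum>j\<in>?X. TT Q2 j - TT Q j) + real (k - 1 - m) * (\<Sum>j\<in>?R. TT Q2 j - TT Q j)"
    by (simp add: Psi_def sum_subtractf algebra_simps)
  then show ?thesis using a1 a2 by (simp add: algebra_simps)
qed

end

context stab
begin

lemma sumR_TT_nonpos:
  assumes D': "D' \<in> longest_sets n d Q2"
  shows "(\<Sum>j\<in>{0..<n} - D'. TT Q2 j) \<le> 0"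
proof -
  let ?R = "{0..<n} - D'"
  define L where "L = (\<Sum>i<n. mu i * real (Q2 i))"
  define W where "W = (\<Sum>i<n. real (Q2 i))"
  define WR where "WR = (\<Sum>j\<in>?R. real (Q2 j))"
  have Dsub: "D' \<subseteq> {0..<n}" "card D' = d" using D' by (auto simp: longest_sets_def)
  have cR: "card ?R = n - d" using card_R[OF Dsub] .
  have WR0: "0 \<le> WR" unfolding WR_def by (intro sum_nonneg) auto
  have kl: "\<delta> * W \<le> L - xx * WR" using KL D' by (simp add: L_def W_def WR_def)
  have tt: "TT Q2 j = 2 * p * real (Q2 j) + (2 * \<delta> * W - 2 * L)" for j
    by (simp add: TT_def L_def W_def)
  have "(\<Sum>j\<in>?R. TT Q2 j) = (\<Sum>j\<in>?R. 2 * p * real (Q2 j)) + (\<Sum>j\<in>?R. (2 * \<delta> * W - 2 * L))"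
    unfolding tt by (rule sum.distrib)
  also have "\<dots> = 2 * p * WR + real (n - d) * (2 * \<delta> * W - 2 * L)"
    using cR by (simp add: WR_def sum_distrib_left)
  also have "\<dots> \<le> 2 * p * WR + real (n - d) * (- 2 * xx * WR)"
    using kl by (intro add_left_mono mult_left_mono) auto
  also have "\<dots> = 2 * (p - real (n - d) * xx) * WR" by (simp add: algebra_simps)
  also have "\<dots> \<le> 0" using mult_nonpos_nonneg[of "2 * (p - real (n - d) * xx)" WR] pxx WR0 by simp
  finally show ?thesis .
qed

lemma Psi_step:
  assumes x: "(Q, D, r, m) \<in> slq_states n d k"
    and M: "\<forall>i<n. \<bar>real (newQ n Q r a s i) - real (Q i)\<bar> \<le> M"
    and y: "y \<in> set_pmf (step_inner n d k Q D r m a s)"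
  shows "\<exists>D2 r2 m2. y = (newQ n Q r a s, D2, r2, m2) \<and>
     Psi (newQ n Q r a s) D2 r2 m2 \<le> Psi Q D r m - TT Q r + real (n + k * n) * E1 M"
proof -
  define Q2 where "Q2 = newQ n Q r a s"
  have Dsub: "D \<subseteq> {0..<n}" and Dc: "card D = d" and rR: "r \<in> {0..<n} - D" and mk: "m < k"
    using x by (auto simp: slq_states_def)
  have M0: "0 \<le> M" using M dn by (meson abs_ge_zero order_trans zero_le d1 less_le_trans order.strict_trans1 zero_less_one)
  have smu: "0 \<le> (\<Sum>i<n. mu i)" using mupos by (intro sum_nonneg) (simp add: less_imp_le)
  have E0: "0 \<le> E1 M" unfolding E1_def using M0 p0 dpos smu
    by (intro add_nonneg_nonneg mult_nonneg_nonneg) auto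
  have PD: "Psi Q2 D2 r2 m2 \<le> Psi Q D2 r2 m2 + real (n + k * n) * E1 M" for D2 r2 m2
    using Psi_diff[OF M[folded Q2_def]] .
  let ?R = "{0..<n} - D"
  show ?thesis
    using less_imp_le[OF dn] y
  proof (cases rule: set_pmf_inner_cases)
    case c1
    have "Psi Q D (Min {j\<in>?R. r < j}) m = (\<Sum>j\<in>{j\<in>?R. r < j}. TT Q j) + real (k - 1 - m) * (\<Sum>j\<in>?R. TT Q j)"
      unfolding Psi_def by (subst succ_set_eq) (use c1 in auto)
    moreover have "Psi Q D r m = TT Q r + (\<Sum>j\<in>{j\<in>?R. r < j}. TT Q j) + real (k - 1 - m) * (\<Sum>j\<in>?R. TT Q j)"
      unfolding Psi_def using rR by (subst cur_set_eq) auto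
    ultimately show ?thesis using c1 PD[of D "Min {j\<in>?R. r < j}" m] by (auto simp: Q2_def)
  next
    case c2
    have "Psi Q D r m = TT Q r + real (k - 1 - m) * (\<Sum>j\<in>?R. TT Q j)"
      unfolding Psi_def using rR c2 by (subst cur_set_last) auto
    moreover have "Psi Q D (Min ?R) (Suc m) = (\<Sum>j\<in>?R. TT Q j) + real (k - 1 - Suc m) * (\<Sum>j\<in>?R. TT Q j)"
      unfolding Psi_def by (subst min_set_all) auto
    moreover have "real (k - 1 - Suc m) + 1 = real (k - 1 - m)" using c2 by (simp add: of_nat_diff)
    ultimately have "Psi Q D (Min ?R) (Suc m) = Psi Q D r m - TT Q r" by (simp add: algebra_simps)
    then show ?thesis using c2 PD[of D "Min ?R" "Suc m"] by (auto simp: Q2_def)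
  next
    case (c3 D')
    have mk1: "k - 1 - m = 0" using c3 mk by simp
    have "Psi Q D r m = TT Q r"
      unfolding Psi_def using rR c3 mk1 by (subst cur_set_last) auto
    moreover have "Psi Q2 D' (Min ({0..<n} - D')) 0 = real k * (\<Sum>j\<in>{0..<n} - D'. TT Q2 j)"
      unfolding Psi_def using k by (subst min_set_all) (auto simp: of_nat_diff algebra_simps)
    moreover have "real k * (\<Sum>j\<in>{0..<n} - D'. TT Q2 j) \<le> 0"
      using sumR_TT_nonpos[OF c3(3)[folded Q2_def]] by (simp add: mult_nonneg_nonpos)
    moreover have "0 \<le> real (n + k * n) * E1 M" using E0 by simp
    ultimately show ?thesis using c3 by (auto simp: Q2_def)
  qed
qed

lemma newQ_close:
  assumes "a \<le> Amax" "\<forall>i<n. s i \<le> Smax"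
  shows "\<forall>i<n. \<bar>real (newQ n Q r a s i) - real (Q i)\<bar> \<le> real (Amax + Smax)"
proof (intro allI impI)
  fix i assume i: "i < n"
  have "real (Q i) + (if i = r then real a else 0) - real (s i) \<le> real (newQ n Q r a s i)"
    by (rule newQ_lower[OF i])
  moreover have "real (newQ n Q r a s i) \<le> real (Q i) + (if i = r then real a else 0)"
    by (rule newQ_upper[OF i])
  moreover have "real (s i) \<le> real Smax" using assms i by simp
  moreover have "real a \<le> real Amax" using assms by simp
  ultimately show "\<bar>real (newQ n Q r a s i) - real (Q i)\<bar> \<le> real (Amax + Smax)"
    by (auto simp: abs_le_iff split: if_splits)
qed

lemma quad_step:
  assumes "a \<le> Amax" "\<forall>i<n. s i \<le> Smax" and rn: "r < n"
  shows "(\<Sum>i<n. (real (newQ n Q r a s i))\<^sup>2) \<le> (\<Sum>i<n. (real (Q i))\<^sup>2) + real n * (real (Amax + Smax))\<^sup>2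
     + 2 * real (Q r) * real a + (\<Sum>i<n. (- 2 * real (Q i)) * real (s i))"
proof -
  define M where "M = real (Amax + Smax)"
  have one: "(real (newQ n Q r a s i))\<^sup>2 \<le> (real (Q i))\<^sup>2 + M\<^sup>2 + 2 * real (Q i) * (if i = r then real a else 0)
      + (- 2 * real (Q i)) * real (s i)" if i: "i < n" for i
  proof -
    define e where "e = (if i = r then real a else 0)"
    define q where "q = real (Q i)"
    define sv where "sv = real (s i)"
    have e0: "0 \<le> e" "e \<le> M" using assms by (auto simp: e_def M_def)
    have s0: "0 \<le> sv" "sv \<le> M" using assms i by (auto simp: sv_def M_def)
    have q0: "0 \<le> q" by (simp add: q_def)
    have nq: "real (newQ n Q r a s i) = (if sv \<le> q + e then q + e - sv else 0)"
      using i by (auto simp: newQ_def e_def q_def sv_def of_nat_diff)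
    have "(if sv \<le> q + e then q + e - sv else 0)\<^sup>2 \<le> q\<^sup>2 + M\<^sup>2 + 2 * q * e + (- 2 * q) * sv"
    proof (cases "sv \<le> q + e")
      case True
      have "(e - sv)\<^sup>2 \<le> M\<^sup>2"
      proof -
        have "\<bar>e - sv\<bar> \<le> M" using e0 s0 by (auto simp: abs_le_iff)
        then have "\<bar>e - sv\<bar>\<^sup>2 \<le> M\<^sup>2" by (intro power_mono) auto
        then show ?thesis by simp
      qed
      then show ?thesis using True by (simp add: power2_eq_square algebra_simps)
    next
      case False
      then have "q < sv" using e0 by simp
      then have "0 \<le> (q - sv)\<^sup>2 + (M\<^sup>2 - sv\<^sup>2) + 2 * q * e"
        using s0 e0 q0 by (intro add_nonneg_nonneg mult_nonneg_nonneg) (auto intro: power_mono)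
      then show ?thesis using False by (simp add: power2_eq_square algebra_simps)
    qed
    then show ?thesis using nq by (simp add: e_def q_def sv_def)
  qed
  have "(\<Sum>i<n. (real (newQ n Q r a s i))\<^sup>2) \<le> (\<Sum>i<n. (real (Q i))\<^sup>2 + M\<^sup>2 + 2 * real (Q i) * (if i = r then real a else 0)
      + (- 2 * real (Q i)) * real (s i))"
    using one by (intro sum_mono) auto
  also have "\<dots> = (\<Sum>i<n. (real (Q i))\<^sup>2) + real n * M\<^sup>2 + 2 * real (Q r) * real a + (\<Sum>i<n. (- 2 * real (Q i)) * real (s i))"
  proof -
    have "(\<Sum>i<n. 2 * real (Q i) * (if i = r then real a else 0)) = (\<Sum>i<n. if i = r then 2 * real (Q i) * real a else 0)"
      by (intro sum.cong) auto
    also have "\<dots> = 2 * real (Q r) * real a" using rn by (simp add: sum.delta)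
    moreover have "(\<Sum>i<n. (real (Q i))\<^sup>2 + M\<^sup>2 + 2 * real (Q i) * (if i = r then real a else 0)
      + (- 2 * real (Q i)) * real (s i)) = (\<Sum>i<n. (real (Q i))\<^sup>2) + (\<Sum>i<n. M\<^sup>2) + (\<Sum>i<n. 2 * real (Q i) * (if i = r then real a else 0))
      + (\<Sum>i<n. (- 2 * real (Q i)) * real (s i))"
      by (simp only: sum.distrib)
    ultimately show ?thesis by simp
  qed
  finally show ?thesis by (simp add: M_def)
qed

end

lemma stable:
  fixes S :: "(nat \<Rightarrow> nat) pmf" and A :: "nat pmf"
  assumes k: "1 \<le> k" and d1: "1 \<le> d" and dn: "d < n"
    and fA: "finite (set_pmf A)" and fS: "finite (set_pmf S)"
    and Amax: "\<forall>a\<in>set_pmf A. a \<le> Amax" and Smax: "\<forall>s\<in>set_pmf S. \<forall>i<n. s i \<le> Smax"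
    and mupos: "\<forall>i<n. 0 < svc_mean S i"
    and plt: "measure_pmf.expectation A real < (\<Sum>i<n. svc_mean S i)"
    and cond: "\<forall>i<n. real (n-d) * svc_mean S i \<le> (\<Sum>i<n. svc_mean S i)"
  shows "slq_positive_recurrent n d k A S"
proof -
  define mu where "mu = svc_mean S"
  define p where "p = measure_pmf.expectation A real"
  have p0: "0 \<le> p" unfolding p_def by (intro integral_nonneg_AE) auto
  define T where "T = (\<Sum>i<n. mu i)"
  have Tpos: "0 < T" unfolding T_def using mupos dn by (intro sum_pos) (auto simp: mu_def)
  have nd: "0 < real (n - d)" using dn by simp
  define xx where "xx = (p / real (n-d) + T / real (n-d)) / 2"
  have pT: "p < T" using plt by (simp add: p_def T_def mu_def)
  have "0 < p / real (n-d) + T / real (n-d)" using p0 Tpos nd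
    by (intro add_nonneg_pos divide_nonneg_pos divide_pos_pos) auto
  then have xxpos: "0 < xx" by (simp add: xx_def)
  have nxx: "real (n-d) * xx = (p + T) / 2"
  proof -
    define nr where "nr = real (n-d)"
    have "nr * ((p / nr + T / nr) / 2) = (p + T) / 2" using nd by (simp add: nr_def[symmetric] field_simps)
    then show ?thesis by (simp add: xx_def nr_def)
  qed
  have xxlt: "real (n-d) * xx < (\<Sum>i<n. mu i)" using pT nxx by (simp add: T_def)
  have pxx: "p \<le> real (n-d) * xx" using pT nxx by simp
  obtain \<delta> where dpos: "0 < \<delta>" and KL: "\<forall>Q. \<forall>D\<in>longest_sets n d Q.
     \<delta> * (\<Sum>i<n. real (Q i)) \<le> (\<Sum>i<n. mu i * real (Q i)) - xx * (\<Sum>i\<in>{0..<n}-D. real (Q i))"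
    using key_ineq[OF d1 dn _ xxpos xxlt] mupos cond by (auto simp: mu_def)
  interpret stab n d k p mu \<delta> xx
    using k d1 dn p0 mupos dpos pxx KL by unfold_locales (auto simp: mu_def)
  define M where "M = real (Amax + Smax)"
  define Err where "Err = real (n + k * n) * E1 M"
  define c where "c = 2 * real (n + k * n)"
  define K0 where "K0 = (\<Sum>i<n. (c * mu i)\<^sup>2)"
  define U where "U x = (case x of (Q, D, r, m) \<Rightarrow> (\<Sum>i<n. (real (Q i))\<^sup>2) + Psi Q D r m + K0)" for x
  define Bc :: nat where "Bc = nat \<lceil>(real n * M\<^sup>2 + Err + 1) / (2 * \<delta>)\<rceil>"
  define C where "C = {x \<in> slq_states n d k. (\<Sum>i<n. fst x i) \<le> Bc}"
  show ?thesis unfolding slq_positive_recurrent_def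
  proof (rule foster[where U=U and C=C])
    show "set_pmf (slq_step n d k A S x) \<subseteq> slq_states n d k" if "x \<in> slq_states n d k" for x
      using closed_step[OF dn k that] by blast
    show "finite (set_pmf (slq_step n d k A S x))" for x
      using finite_step[OF fA fS] dn by simp
  next
    fix x assume x: "x \<in> slq_states n d k"
    obtain Q D r m where xe: "x = (Q, D, r, m)" by (cases x)
    have "- c * (\<Sum>i<n. mu i * real (Q i)) \<le> Psi Q D r m"
      using Psi_lower[of Q D r m] by (simp add: c_def)
    moreover have "0 \<le> (\<Sum>i<n. (real (Q i))\<^sup>2 - c * (mu i * real (Q i)) + (c * mu i)\<^sup>2)"
    proof (intro sum_nonneg)
      fix i assume "i \<in> {..<n}"
      then have b0: "0 \<le> c * mu i" using mupos by (simp add: c_def mu_def less_imp_le)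
      have "0 \<le> (real (Q i) - c * mu i)\<^sup>2 + real (Q i) * (c * mu i)"
        by (rule add_nonneg_nonneg[OF zero_le_power2 mult_nonneg_nonneg[OF of_nat_0_le_iff b0]])
      moreover have "(real (Q i) - c * mu i)\<^sup>2 + real (Q i) * (c * mu i) = (real (Q i))\<^sup>2 - c * (mu i * real (Q i)) + (c * mu i)\<^sup>2"
        by (simp add: power2_eq_square algebra_simps)
      ultimately show "0 \<le> (real (Q i))\<^sup>2 - c * (mu i * real (Q i)) + (c * mu i)\<^sup>2" by simp
    qed
    ultimately show "0 \<le> U x"
      by (simp add: U_def xe K0_def sum.distrib sum_subtractf sum_distrib_left sum_negf)
  next
    fix x assume x: "x \<in> slq_states n d k" and xC: "x \<notin> C"
    obtain Q D r m where xe: "x = (Q, D, r, m)" by (cases x)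
    have rn: "r < n" using x xe by (auto simp: slq_states_def)
    let ?c0 = "(\<Sum>i<n. (real (Q i))\<^sup>2) + real n * M\<^sup>2 + Psi Q D r m - TT Q r + Err + K0"
    let ?c1 = "2 * real (Q r)"
    let ?c2 = "\<lambda>i. - 2 * real (Q i)"
    have "measure_pmf.expectation (slq_step n d k A S (Q, D, r, m)) U
       \<le> ?c0 + ?c1 * measure_pmf.expectation A real + (\<Sum>i<n. ?c2 i * svc_mean S i)"
    proof (rule step_exp_upper[OF fA fS less_imp_le[OF dn]])
      fix a s y assume a: "a \<in> set_pmf A" and s: "s \<in> set_pmf S"
        and y: "y \<in> set_pmf (step_inner n d k Q D r m a s)"
      have aA: "a \<le> Amax" and sS: "\<forall>i<n. s i \<le> Smax" using a s Amax Smax by auto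
      obtain D2 r2 m2 where ye: "y = (newQ n Q r a s, D2, r2, m2)"
        and ps: "Psi (newQ n Q r a s) D2 r2 m2 \<le> Psi Q D r m - TT Q r + real (n + k * n) * E1 M"
        using Psi_step[OF x[unfolded xe] newQ_close[OF aA sS, folded M_def] y] by blast
      have q: "(\<Sum>i<n. (real (newQ n Q r a s i))\<^sup>2) \<le> (\<Sum>i<n. (real (Q i))\<^sup>2) + real n * M\<^sup>2
         + 2 * real (Q r) * real a + (\<Sum>i<n. (- 2 * real (Q i)) * real (s i))"
        using quad_step[OF aA sS rn] by (simp add: M_def)
      show "U y \<le> ?c0 + ?c1 * real a + (\<Sum>i<n. ?c2 i * real (s i))"
        using q ps by (simp add: U_def ye Err_def)
    qed
    also have "\<dots> = U x - 2 * \<delta> * (\<Sum>i<n. real (Q i)) + real n * M\<^sup>2 + Err"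
    proof -
      have "(\<Sum>i<n. ?c2 i * svc_mean S i) = - 2 * (\<Sum>i<n. mu i * real (Q i))"
        by (simp add: sum_distrib_left mu_def algebra_simps)
      then show ?thesis
        by (simp add: U_def xe TT_def p_def[symmetric] algebra_simps)
    qed
    also have "\<dots> \<le> U x - 1"
    proof -
      have "\<not> (\<Sum>i<n. Q i) \<le> Bc" using xC x xe by (simp add: C_def)
      then have "real Bc + 1 \<le> (\<Sum>i<n. real (Q i))" by (simp add: of_nat_sum[symmetric] del: of_nat_sum)
      moreover have "(real n * M\<^sup>2 + Err + 1) / (2 * \<delta>) \<le> real Bc"
        unfolding Bc_def by linarith
      ultimately have "(real n * M\<^sup>2 + Err + 1) / (2 * \<delta>) \<le> (\<Sum>i<n. real (Q i))" by linarith
      then have "real n * M\<^sup>2 + Err + 1 \<le> 2 * \<delta> * (\<Sum>i<n. real (Q i))"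
        using dpos by (simp add: field_simps)
      then show ?thesis by linarith
    qed
    finally show "measure_pmf.expectation (slq_step n d k A S x) U \<le> U x - 1" by (simp add: xe)
  next
    show "C \<subseteq> slq_states n d k" by (auto simp: C_def)
    have "C \<subseteq> {Q. \<forall>i. (i \<in> {..<n} \<longrightarrow> Q i \<in> {..Bc}) \<and> (i \<notin> {..<n} \<longrightarrow> Q i = 0)} \<times> (Pow {0..<n} \<times> ({0..<n} \<times> {..<k}))"
    proof
      fix x assume xC: "x \<in> C"
      obtain Q D r m where xe: "x = (Q, D, r, m)" by (cases x)
      have sQ: "(\<Sum>i<n. Q i) \<le> Bc" and xs: "x \<in> slq_states n d k" using xC xe by (auto simp: C_def)
      have "Q i \<le> Bc" if "i < n" for i
        using member_le_sum[of i "{..<n}" Q] that sQ by simp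
      then show "x \<in> {Q. \<forall>i. (i \<in> {..<n} \<longrightarrow> Q i \<in> {..Bc}) \<and> (i \<notin> {..<n} \<longrightarrow> Q i = 0)} \<times> (Pow {0..<n} \<times> ({0..<n} \<times> {..<k}))"
        using xs xe by (auto simp: slq_states_def)
    qed
    moreover have "finite {Q. \<forall>i. (i \<in> {..<n} \<longrightarrow> Q i \<in> {..Bc}) \<and> (i \<notin> {..<n} \<longrightarrow> Q i = (0::nat))}"
      by (rule finite_set_of_finite_funs) auto
    ultimately show "finite C"
      by (elim finite_subset) (intro finite_cartesian_product, auto)
  qed
qed

definition trunc_fn :: "nat \<Rightarrow> (nat \<Rightarrow> nat) \<Rightarrow> nat \<Rightarrow> nat" where
  "trunc_fn n s = (\<lambda>i. if i < n then s i else 0)"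

lemma newQ_trunc: "newQ n Q r a (trunc_fn n s) = newQ n Q r a s"
  by (simp add: newQ_def trunc_fn_def fun_eq_iff)

lemma step_trunc: "slq_step n d k A (map_pmf (trunc_fn n) S) = slq_step n d k A S"
proof (intro ext)
  fix x :: slq_state
  obtain Q D r m where xe: "x = (Q, D, r, m)" by (cases x)
  have "step_inner n d k Q D r m a (trunc_fn n s) = step_inner n d k Q D r m a s" for a s
    by (simp add: step_inner_def newQ_trunc)
  then show "slq_step n d k A (map_pmf (trunc_fn n) S) x = slq_step n d k A S x"
    by (simp add: xe step_eq bind_map_pmf)
qed

lemma mean_trunc: "i < n \<Longrightarrow> svc_mean (map_pmf (trunc_fn n) S) i = svc_mean S i"
  by (simp add: svc_mean_def trunc_fn_def)

lemma finite_trunc: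
  assumes "\<forall>s\<in>set_pmf S. \<forall>i<n. s i \<le> Smax"
  shows "finite (set_pmf (map_pmf (trunc_fn n) S))"
proof -
  have "set_pmf (map_pmf (trunc_fn n) S) \<subseteq> {s. \<forall>i. (i \<in> {..<n} \<longrightarrow> s i \<in> {..Smax}) \<and> (i \<notin> {..<n} \<longrightarrow> s i = 0)}"
    using assms by (auto simp: trunc_fn_def)
  moreover have "finite {s. \<forall>i. (i \<in> {..<n} \<longrightarrow> s i \<in> {..Smax}) \<and> (i \<notin> {..<n} \<longrightarrow> s i = (0::nat))}"
    by (rule finite_set_of_finite_funs) auto
  ultimately show ?thesis by (rule finite_subset)
qed

lemma bound_trunc:
  assumes "\<forall>s\<in>set_pmf S. \<forall>i<n. s i \<le> Smax"
  shows "\<forall>s\<in>set_pmf (map_pmf (trunc_fn n) S). \<forall>i<n. s i \<le> Smax"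
  using assms by (auto simp: trunc_fn_def)

theorem corollary1:
  fixes n d k :: nat and S :: "(nat \<Rightarrow> nat) pmf"
  assumes "1 \<le> k" and "1 \<le> d" and "d < n"
    and "\<exists>Smax. \<forall>s\<in>set_pmf S. \<forall>i<n. s i \<le> Smax"
    and "\<forall>i<n. svc_mean S i > 0"
  shows "(\<forall>A :: nat pmf. (\<exists>Amax. \<forall>a\<in>set_pmf A. a \<le> Amax) \<and>
              measure_pmf.expectation A real < (\<Sum>l<n. svc_mean S l)
            \<longrightarrow> slq_positive_recurrent n d k A S)
         \<longleftrightarrow> (\<Sum>l<n. svc_mean S l) \<ge> real (n - d) * Max (svc_mean S ` {..<n})"
proof -
  note k = assms(1) and d1 = assms(2) and dn = assms(3) and mupos = assms(5)
  obtain Smax where Smax: "\<forall>s\<in>set_pmf S. \<forall>i<n. s i \<le> Smax" using assms(4) by blast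
  define St where "St = map_pmf (trunc_fn n) S"
  have fS: "finite (set_pmf St)" using finite_trunc[OF Smax] by (simp add: St_def)
  have SmaxT: "\<forall>s\<in>set_pmf St. \<forall>i<n. s i \<le> Smax" using bound_trunc[OF Smax] by (simp add: St_def)
  have muT: "\<And>i. i < n \<Longrightarrow> svc_mean St i = svc_mean S i" by (simp add: St_def mean_trunc)
  have stepT: "\<And>A. slq_positive_recurrent n d k A St = slq_positive_recurrent n d k A S"
    by (simp add: slq_positive_recurrent_def St_def step_trunc)
  define mu where "mu = svc_mean S"
  define T where "T = (\<Sum>l<n. mu l)"
  have sumT: "(\<Sum>l<n. svc_mean St l) = T" by (simp add: T_def mu_def muT)
  have muposT: "\<forall>i<n. 0 < svc_mean St i" using mupos muT by simp
  have nne: "{..<n} \<noteq> {}" using dn by auto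
  have condiff: "(T \<ge> real (n - d) * Max (mu ` {..<n})) \<longleftrightarrow> (\<forall>i<n. real (n-d) * mu i \<le> T)"
  proof
    assume h: "T \<ge> real (n - d) * Max (mu ` {..<n})"
    show "\<forall>i<n. real (n-d) * mu i \<le> T"
    proof (intro allI impI)
      fix i assume "i < n"
      then have "mu i \<le> Max (mu ` {..<n})" by simp
      then have "real (n-d) * mu i \<le> real (n - d) * Max (mu ` {..<n})" by (intro mult_left_mono) auto
      then show "real (n-d) * mu i \<le> T" using h by simp
    qed
  next
    assume h: "\<forall>i<n. real (n-d) * mu i \<le> T"
    have "Max (mu ` {..<n}) \<in> mu ` {..<n}" using nne by (intro Max_in) auto
    then obtain i where "i < n" "Max (mu ` {..<n}) = mu i" by auto
    then show "T \<ge> real (n - d) * Max (mu ` {..<n})" using h by simp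
  qed
  show ?thesis
  proof
    assume H: "\<forall>A :: nat pmf. (\<exists>Amax. \<forall>a\<in>set_pmf A. a \<le> Amax) \<and>
              measure_pmf.expectation A real < (\<Sum>l<n. svc_mean S l)
            \<longrightarrow> slq_positive_recurrent n d k A S"
    show "(\<Sum>l<n. svc_mean S l) \<ge> real (n - d) * Max (svc_mean S ` {..<n})"
    proof (rule ccontr)
      assume "\<not> ?thesis"
      then have "\<not> (\<forall>i<n. real (n-d) * mu i \<le> T)" using condiff by (simp add: T_def mu_def)
      then obtain l where l: "l < n" and big: "T < real (n-d) * mu l" by (auto simp: not_le)
      define sg where "sg = (\<Sum>i\<in>{..<n}-{l}. mu i)"
      have Tsplit: "T = mu l + sg" using l by (simp add: T_def sg_def sum.remove[of "{..<n}" l])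
      obtain j where j: "j < n" "j \<noteq> l" using d1 dn l
        by (metis One_nat_def Suc_1 Suc_le_lessD less_irrefl nat_neq_iff not_less_eq zero_less_Suc)
      have sgpos: "0 < sg" unfolding sg_def using mupos j by (intro sum_pos2[of _ j]) (auto simp: mu_def less_imp_le)
      have mul: "0 < mu l" using mupos l by (simp add: mu_def)
      have nd2: "2 \<le> n - d"
      proof (rule ccontr)
        assume "\<not> 2 \<le> n - d"
        then have "n - d = 1" using dn by simp
        then show False using big Tsplit sgpos by simp
      qed
      define nr where "nr = real (n - d)"
      have nr2: "2 \<le> nr" using nd2 by (simp add: nr_def)
      define p0 where "p0 = nr * sg / (nr - 1)"
      have p0pos: "0 \<le> p0" using nr2 sgpos by (simp add: p0_def)
      have pge: "nr * sg = (nr - 1) * p0" using nr2 by (simp add: p0_def)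
      have p0lt: "p0 < T"
      proof -
        have "nr * sg < (nr - 1) * T" using big Tsplit by (simp add: nr_def algebra_simps)
        then show ?thesis using nr2 by (simp add: p0_def field_simps)
      qed
      define a0 :: nat where "a0 = nat \<lceil>p0\<rceil> + 1"
      have a0pos: "0 < real a0" by (simp add: a0_def)
      have a0ge: "p0 \<le> real a0" unfolding a0_def by linarith
      define q where "q = p0 / real a0"
      have q01: "0 \<le> q" "q \<le> 1" using p0pos a0pos a0ge by (auto simp: q_def field_simps)
      define A where "A = map_pmf (\<lambda>b. if b then a0 else 0) (bernoulli_pmf q)"
      have EA: "measure_pmf.expectation A real = p0"
        using q01 a0pos by (simp add: A_def q_def)
      have setA: "set_pmf A \<subseteq> {0, a0}" by (auto simp: A_def)
      have fA: "finite (set_pmf A)" using setA finite_subset by blast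
      have Amax: "\<forall>a\<in>set_pmf A. a \<le> a0" using setA by auto
      have "slq_positive_recurrent n d k A S"
        using H Amax EA p0lt by (auto simp: T_def mu_def)
      moreover have "\<not> slq_positive_recurrent n d k A St"
      proof (rule unstable[OF k dn fA fS Amax l])
        show "2 \<le> n" using d1 dn by simp
        show "0 \<le> measure_pmf.expectation A real" using EA p0pos by simp
        have "(\<Sum>i\<in>{..<n}-{l}. svc_mean St i) = sg" unfolding sg_def mu_def by (intro sum.cong) (auto simp: muT)
        then show "0 \<le> (\<Sum>i\<in>{..<n}-{l}. svc_mean St i)"
          and "real (n-d) * (\<Sum>i\<in>{..<n}-{l}. svc_mean St i) \<le> (real (n-d) - 1) * measure_pmf.expectation A real"
          using sgpos EA pge by (simp_all add: nr_def)
      qed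
      ultimately show False using stepT by simp
    qed
  next
    assume C: "(\<Sum>l<n. svc_mean S l) \<ge> real (n - d) * Max (svc_mean S ` {..<n})"
    then have cond: "\<forall>i<n. real (n-d) * mu i \<le> T" using condiff by (simp add: T_def mu_def)
    show "\<forall>A :: nat pmf. (\<exists>Amax. \<forall>a\<in>set_pmf A. a \<le> Amax) \<and>
              measure_pmf.expectation A real < (\<Sum>l<n. svc_mean S l)
            \<longrightarrow> slq_positive_recurrent n d k A S"
    proof (intro allI impI, elim conjE exE)
      fix A :: "nat pmf" and Amax assume Amax: "\<forall>a\<in>set_pmf A. a \<le> Amax"
        and lt: "measure_pmf.expectation A real < (\<Sum>l<n. svc_mean S l)"
      have "set_pmf A \<subseteq> {..Amax}" using Amax by auto
      then have fA: "finite (set_pmf A)" using finite_subset by blast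
      have "slq_positive_recurrent n d k A St"
      proof (rule stable[OF k d1 dn fA fS Amax SmaxT muposT])
        show "measure_pmf.expectation A real < (\<Sum>i<n. svc_mean St i)" using lt sumT by (simp add: T_def mu_def)
        show "\<forall>i<n. real (n-d) * svc_mean St i \<le> (\<Sum>i<n. svc_mean St i)" using cond sumT muT by (simp add: mu_def)
      qed
      then show "slq_positive_recurrent n d k A S" using stepT by simp
    qed
  qed
qed


end
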